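(* Let $p,\alpha,\beta>0$ and $\sigma^2>0$, and let $X=(X_t)_{t\ge0}$ be a real-valued Lévy process with characteristics $(a,\sigma^2,\Pi)$ where $\Pi(dx)=\beta\alpha e^{\alpha x}\mathbf{1}_{\{x\le0\}}\,dx$ and $a=p+\int_{|x|<1}x\,\Pi(dx)$ (so that $u+X_t$ is the Cramér–Lundberg model perturbed by Brownian motion, $u+pt+\sigma W_t-\sum_{n=1}^{N_t}U_n$, with $N$ a Poisson process of rate $\beta$, $W$ a standard Brownian motion and $U_n$ i.i.d. exponential with rate $\alpha$, all independent). For $u\ge0$ let $\tau(u)=\inf\{t\ge0:X_t\le -u\}$ ($\tau(u)=+\infty$ if the set is empty). Let $\Delta=(\sigma^2\alpha-2p)^2+8\sigma^2\beta$ and $\gamma_-=\frac{\sigma^2\alpha+2p-\sqrt{\Delta}}{2\sigma^2}$. Then: (1) if $p\le \beta/\alpha$, then $\mathbf{P}(\tau(u)<+\infty)=1$ for all $u\ge0$; (2) if $p>\beta/\alpha$ and $\gamma_-<\alpha$, then $\mathbf{P}(\tau(u)<+\infty)\le e^{-\gamma_- u}$ for all $u\ge 0$; (3) if $p>\beta/\alpha$ and $\gamma_-\ge\alpha$, then $\mathbf{P}(\tau(u)<+\infty)\le e^{-\alpha u}$ for all $u\ge0$.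
   Context: A Lévy process with characteristics $(a,\sigma^2,\Pi)$ has characteristic function $\mathbf{E}(e^{i\lambda X_t})=e^{t\Phi(\lambda)}$, $\Phi(\lambda)=ia\lambda-\frac{\sigma^2}{2}\lambda^2+\int_{\mathbb{R}}(e^{i\lambda x}-1-i\lambda x\mathbf{1}_{\{|x|<1\}})\Pi(dx)$. $\mathbf{P}(\tau(u)<+\infty)$ is the ultimate ruin probability of $u+X$. *)

theory Defs
  imports "HOL-Probability.Probability"
begin

definition cadlag :: "(real \<Rightarrow> real) \<Rightarrow> bool" where
  "cadlag f \<longleftrightarrow> (\<forall>t\<ge>0. continuous (at_right t) f) \<and> (\<forall>t>0. \<exists>l. (f \<longlongrightarrow> l) (at_left t))"

definition levy_process :: "'a measure \<Rightarrow> (real \<Rightarrow> 'a \<Rightarrow> real) \<Rightarrow> bool" where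
  "levy_process M X \<longleftrightarrow>
     prob_space M \<and>
     (\<forall>t\<ge>0. X t \<in> borel_measurable M) \<and>
     (AE \<omega> in M. X 0 \<omega> = 0) \<and>
     (AE \<omega> in M. cadlag (\<lambda>t. X t \<omega>)) \<and>
     (\<forall>(n::nat) (t::nat \<Rightarrow> real). 0 \<le> t 0 \<and> (\<forall>k<n. t k < t (Suc k)) \<longrightarrow>
        prob_space.indep_vars M (\<lambda>_. borel) (\<lambda>k \<omega>. X (t (Suc k)) \<omega> - X (t k) \<omega>) {..<n}) \<and>
     (\<forall>s t. 0 \<le> s \<and> s \<le> t \<longrightarrow>
        distr M borel (\<lambda>\<omega>. X t \<omega> - X s \<omega>) = distr M borel (X (t - s)))"

definition levy_exponent :: "real \<Rightarrow> real \<Rightarrow> real measure \<Rightarrow> real \<Rightarrow> complex" where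
  "levy_exponent a s2 Lm l =
     \<i> * complex_of_real (a * l) - complex_of_real (s2 / 2 * l\<^sup>2)
     + (CLINT x|Lm. exp (\<i> * complex_of_real (l * x)) - 1
                     - \<i> * complex_of_real (l * x * indicator {y. \<bar>y\<bar> < 1} x))"

definition has_characteristics ::
    "'a measure \<Rightarrow> (real \<Rightarrow> 'a \<Rightarrow> real) \<Rightarrow> real \<Rightarrow> real \<Rightarrow> real measure \<Rightarrow> bool" where
  "has_characteristics M X a s2 Lm \<longleftrightarrow>
     (\<forall>t\<ge>0. \<forall>l. char (distr M borel (X t)) l = exp (complex_of_real t * levy_exponent a s2 Lm l))"

definition exp_jump_measure :: "real \<Rightarrow> real \<Rightarrow> real measure" where
  "exp_jump_measure \<alpha> \<beta> =
     density lborel (\<lambda>x. ennreal (\<beta> * \<alpha> * exp (\<alpha> * x)) * indicator {..0} x)"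

definition ruin_time :: "(real \<Rightarrow> 'a \<Rightarrow> real) \<Rightarrow> real \<Rightarrow> 'a \<Rightarrow> ereal" where
  "ruin_time X u \<omega> =
     (if {t. 0 \<le> t \<and> X t \<omega> \<le> - u} = {} then \<infinity>
      else ereal (Inf {t. 0 \<le> t \<and> X t \<omega> \<le> - u}))"

text \<open>P(tau(u) < infinity), measured in the completion of M (the event is universally
  measurable but need not lie in sets M itself).\<close>
definition ruin_prob :: "'a measure \<Rightarrow> (real \<Rightarrow> 'a \<Rightarrow> real) \<Rightarrow> real \<Rightarrow> real" where
  "ruin_prob M X u = measure (completion M) {\<omega> \<in> space M. ruin_time X u \<omega> < \<infinity>}"

end

theory Submission
  imports Defs
begin

lemma exp_real_Iio_integrable:
  fixes r :: real assumes r: "r > 0"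
  shows "set_integrable lborel (einterval (-\<infinity>) 0) (\<lambda>x. exp (r * x))"
    "(LBINT x=-\<infinity>..0. exp (r * x)) = 1 / r"
proof -
  have D: "\<And>x. DERIV (\<lambda>x. exp (r * x) / r) x :> exp (r * x)"
    using r by (auto intro!: derivative_eq_intros)
  have A: "(((\<lambda>x. exp (r * x) / r) \<circ> real_of_ereal) \<longlongrightarrow> 0) (at_right (-\<infinity>))"
    unfolding ereal_tendsto_simps using r by real_asymp
  have B: "(((\<lambda>x. exp (r * x) / r) \<circ> real_of_ereal) \<longlongrightarrow> 1/r) (at_left 0)"
    unfolding zero_ereal_def ereal_tendsto_simps using r
    by (auto intro!: tendsto_eq_intros)
  show "set_integrable lborel (einterval (-\<infinity>) 0) (\<lambda>x. exp (r * x))"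
    "(LBINT x=-\<infinity>..0. exp (r * x)) = 1 / r"
    using interval_integral_FTC_nonneg[OF _ D _ _ A B] by auto
qed

lemma einterval_minf_0: "einterval (-\<infinity>) 0 = {..<(0::real)}"
  by (auto simp: einterval_def zero_ereal_def)

lemma exp_cplx_Iio:
  fixes w :: complex assumes w: "Re w > 0"
  shows "has_bochner_integral lborel (\<lambda>x. indicator {..0} x *\<^sub>R exp (w * of_real x)) (1 / w)"
proof -
  have w0: "w \<noteq> 0" using w by auto
  have ri: "set_integrable lborel (einterval (-\<infinity>) 0) (\<lambda>x. exp (Re w * x))"
    using exp_real_Iio_integrable(1)[OF w] .
  have ci: "set_integrable lborel (einterval (-\<infinity>) 0) (\<lambda>x. exp (w * of_real x))"
    by (rule set_integrable_bound[OF ri]) (auto simp: norm_exp_eq_Re set_borel_measurable_def)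
  have D: "\<And>x. ((\<lambda>x. exp (w * of_real x) / w) has_vector_derivative exp (w * of_real x)) (at x)"
  proof -
    fix x :: real
    have "((\<lambda>z. exp (w * z) / w) has_field_derivative exp (w * of_real x) / w * w) (at (of_real x))"
      by (auto intro!: derivative_eq_intros)
    then have "((\<lambda>z. exp (w * z) / w) has_field_derivative exp (w * of_real x)) (at (of_real x))"
      using w0 by simp
    from has_vector_derivative_real_field[OF this] show "?thesis x" .
  qed
  have A: "(((\<lambda>x. exp (w * of_real x) / w) \<circ> real_of_ereal) \<longlongrightarrow> 0) (at_right (-\<infinity>))"
  proof -
    have "((\<lambda>x::real. exp (Re w * x)) \<longlongrightarrow> 0) at_bot"
      using w by real_asymp
    then have "((\<lambda>x::real. exp (Re w * x) / norm w) \<longlongrightarrow> 0) at_bot"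
      by (rule tendsto_divide_zero)
    then have "((\<lambda>x::real. exp (w * of_real x) / w) \<longlongrightarrow> 0) at_bot"
      by (subst tendsto_norm_zero_iff[symmetric]) (simp add: norm_divide norm_exp_eq_Re)
    then show ?thesis unfolding ereal_tendsto_simps .
  qed
  have B: "(((\<lambda>x. exp (w * of_real x) / w) \<circ> real_of_ereal) \<longlongrightarrow> 1 / w) (at_left 0)"
    unfolding zero_ereal_def ereal_tendsto_simps
    using w0 by (auto intro!: tendsto_eq_intros)
  have I: "(LBINT x=-\<infinity>..0. exp (w * of_real x)) = 1 / w"
    using interval_integral_FTC_integrable[OF _ D _ ci A B] w0 by auto
  have "has_bochner_integral lborel (\<lambda>x. indicator {..<0} x *\<^sub>R exp (w * of_real x)) (1 / w)"
    using ci I by (simp add: has_bochner_integral_iff set_integrable_def set_lebesgue_integral_def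
        interval_lebesgue_integral_def einterval_minf_0 zero_ereal_def)
  then show ?thesis
    by (rule has_bochner_integral_cong_AE[THEN iffD1, rotated -1])
       (auto intro!: AE_I[where N="{0}"] simp: indicator_def)
qed

definition qd :: "real \<Rightarrow> real \<Rightarrow> real" where
  "qd \<alpha> x = \<alpha> * exp (\<alpha> * x) * indicator {..0} x"

lemma qd_nonneg: "\<alpha> > 0 \<Longrightarrow> qd \<alpha> x \<ge> 0"
  by (auto simp: qd_def indicator_def)

lemma qd_measurable[measurable]: "qd \<alpha> \<in> borel_measurable borel"
  unfolding qd_def by measurable

lemma exp_of_real_mult: "exp (complex_of_real a * complex_of_real b) = complex_of_real (exp (a*b))"
  by (metis exp_of_real of_real_mult)

lemma qd_cexp:
  fixes z :: complex assumes a: "\<alpha> > 0" and z: "Re z > - \<alpha>"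
  shows "has_bochner_integral lborel (\<lambda>x. qd \<alpha> x *\<^sub>R exp (z * of_real x)) (\<alpha> / (\<alpha> + z))"
proof -
  have w: "Re (of_real \<alpha> + z) > 0" using z by simp
  have "has_bochner_integral lborel (\<lambda>x. of_real \<alpha> * (indicator {..0} x *\<^sub>R exp ((of_real \<alpha> + z) * of_real x)))
     (of_real \<alpha> * (1 / (of_real \<alpha> + z)))"
    by (rule has_bochner_integral_mult_right[OF exp_cplx_Iio[OF w]])
  moreover have "\<And>x. of_real \<alpha> * (indicator {..0} x *\<^sub>R exp ((of_real \<alpha> + z) * of_real x))
      = qd \<alpha> x *\<^sub>R exp (z * of_real x)"
    by (auto simp: qd_def indicator_def scaleR_conv_of_real distrib_right exp_add exp_of_real_mult)
  ultimately show ?thesis by simp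
qed

lemma qd_integrable_bounded:
  fixes f :: "real \<Rightarrow> 'b::{banach, second_countable_topology}"
  assumes a: "\<alpha> > 0" and f[measurable]: "f \<in> borel_measurable borel" and b: "\<And>x. norm (f x) \<le> B"
  shows "integrable lborel (\<lambda>x. qd \<alpha> x *\<^sub>R f x)"
proof -
  have "integrable lborel (\<lambda>x. qd \<alpha> x *\<^sub>R exp (0 * of_real x :: complex))"
    using qd_cexp[OF a, of 0] a by (auto simp: has_bochner_integral_iff)
  then have "integrable lborel (\<lambda>x. qd \<alpha> x)"
    by (simp add: scaleR_conv_of_real complex_of_real_integrable_eq)
  then have I1: "integrable lborel (\<lambda>x. B * qd \<alpha> x)" by simp
  have AE1: "AE x in lborel. norm (qd \<alpha> x *\<^sub>R f x) \<le> norm (B * qd \<alpha> x)"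
  proof (intro AE_I2)
    fix x
    have "qd \<alpha> x * norm (f x) \<le> qd \<alpha> x * B" by (rule mult_left_mono[OF b qd_nonneg[OF a]])
    then show "norm (qd \<alpha> x *\<^sub>R f x) \<le> norm (B * qd \<alpha> x)"
      using qd_nonneg[OF a, of x] by (simp add: mult.commute)
  qed
  show ?thesis
    by (rule Bochner_Integration.integrable_bound[OF I1 _ AE1]) measurable
qed

lemma exp_jump_measure_eq: "\<alpha> > 0 \<Longrightarrow> \<beta> > 0 \<Longrightarrow>
   exp_jump_measure \<alpha> \<beta> = density lborel (\<lambda>x. ennreal (\<beta> * qd \<alpha> x))"
  unfolding exp_jump_measure_def qd_def
  by (intro density_cong) (auto simp: indicator_def)

lemma levy_exponent_explicit:
  assumes a: "\<alpha> > 0" and b: "\<beta> > 0"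
    and ha: "A = p + (LINT x|exp_jump_measure \<alpha> \<beta>. x * indicator {y. \<bar>y\<bar> < 1} x)"
  shows "levy_exponent A s2 (exp_jump_measure \<alpha> \<beta>) l =
     \<i> * of_real (p * l) - of_real (s2 / 2 * l\<^sup>2) + \<beta> * \<alpha> / (\<alpha> + \<i> * l) - \<beta>"
proof -
  let ?g = "\<lambda>x. \<beta> * qd \<alpha> x"
  have gm[measurable]: "?g \<in> borel_measurable borel" by measurable
  have gnn: "AE x in lborel. 0 \<le> ?g x" using a b qd_nonneg[OF a] by auto
  define J where "J = (LINT x|lborel. qd \<alpha> x *\<^sub>R (x * indicator {y. \<bar>y\<bar> < 1} x))"
  have ib: "\<And>x::real. norm (x * indicator {y. \<bar>y\<bar> < 1} x) \<le> (1::real)"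
    by (auto simp: indicator_def)
  have iJ: "integrable lborel (\<lambda>x. qd \<alpha> x *\<^sub>R (x * indicator {y. \<bar>y\<bar> < 1} x))"
    by (rule qd_integrable_bounded[OF a _ ib]) measurable
  have hA: "A = p + \<beta> * J"
    unfolding ha J_def exp_jump_measure_eq[OF a b]
    by (subst integral_density) (use gnn in \<open>auto simp: mult.assoc\<close>)
  have E1: "has_bochner_integral lborel (\<lambda>x. qd \<alpha> x *\<^sub>R exp ((\<i> * of_real l) * of_real x)) (\<alpha> / (\<alpha> + \<i> * l))"
    by (rule qd_cexp[OF a]) (use a in simp)
  have E0: "has_bochner_integral lborel (\<lambda>x. qd \<alpha> x *\<^sub>R (1::complex)) 1"
    using qd_cexp[OF a, of 0] a by simp
  have EJ: "has_bochner_integral lborel (\<lambda>x. qd \<alpha> x *\<^sub>R complex_of_real (x * indicator {y. \<bar>y\<bar> < 1} x)) (of_real J)"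
  proof -
    have "has_bochner_integral lborel (\<lambda>x. complex_of_real (qd \<alpha> x *\<^sub>R (x * indicator {y. \<bar>y\<bar> < 1} x))) (of_real J)"
      using iJ unfolding J_def
      by (intro has_bochner_integral_of_real) (simp add: has_bochner_integral_iff)
    then show ?thesis by (simp add: scaleR_conv_of_real)
  qed
  have "has_bochner_integral lborel
     (\<lambda>x. qd \<alpha> x *\<^sub>R exp ((\<i> * of_real l) * of_real x) - qd \<alpha> x *\<^sub>R (1::complex)
        - (\<i> * of_real l) * (qd \<alpha> x *\<^sub>R complex_of_real (x * indicator {y. \<bar>y\<bar> < 1} x)))
     (\<alpha> / (\<alpha> + \<i> * l) - 1 - (\<i> * of_real l) * of_real J)"
    by (intro has_bochner_integral_diff E1 E0 has_bochner_integral_mult_right EJ)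
  then have H2: "has_bochner_integral lborel
     (\<lambda>x. of_real \<beta> * (qd \<alpha> x *\<^sub>R exp ((\<i> * of_real l) * of_real x) - qd \<alpha> x *\<^sub>R (1::complex)
        - (\<i> * of_real l) * (qd \<alpha> x *\<^sub>R complex_of_real (x * indicator {y. \<bar>y\<bar> < 1} x))))
     (of_real \<beta> * (\<alpha> / (\<alpha> + \<i> * l) - 1 - (\<i> * of_real l) * of_real J))"
    by (rule has_bochner_integral_mult_right)
  have "has_bochner_integral lborel
     (\<lambda>x. ?g x *\<^sub>R (exp (\<i> * complex_of_real (l * x)) - 1
                     - \<i> * complex_of_real (l * x * indicator {y. \<bar>y\<bar> < 1} x)))
     (\<beta> * (\<alpha> / (\<alpha> + \<i> * l) - 1 - (\<i> * of_real l) * of_real J))"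
    by (rule has_bochner_integral_cong[THEN iffD1, OF _ _ _ H2])
       (auto simp: scaleR_conv_of_real algebra_simps)
  then have "(CLINT x|exp_jump_measure \<alpha> \<beta>. exp (\<i> * complex_of_real (l * x)) - 1
                     - \<i> * complex_of_real (l * x * indicator {y. \<bar>y\<bar> < 1} x))
     = \<beta> * (\<alpha> / (\<alpha> + \<i> * l) - 1 - (\<i> * of_real l) * of_real J)"
    unfolding exp_jump_measure_eq[OF a b]
    by (subst integral_density) (use gnn in \<open>auto simp: has_bochner_integral_iff\<close>)
  then show ?thesis
    unfolding levy_exponent_def hA by (simp add: algebra_simps)
qed

definition Gm :: "real \<Rightarrow> real \<Rightarrow> real measure" where
  "Gm m c = distr std_normal_distribution borel (\<lambda>z. m + c * z)"

lemma prob_Gm: "prob_space (Gm m c)"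
  unfolding Gm_def
  by (intro prob_space.prob_space_distr real_distribution.axioms(1) real_dist_normal_dist) measurable

lemma sets_Gm[simp]: "sets (Gm m c) = sets borel"
  by (simp add: Gm_def)

lemma char_Gm: "char (Gm m c) l = iexp (l * m) * of_real (exp (- ((l * c)^2) / 2))"
proof -
  have "char (Gm m c) l = (CLINT z|std_normal_distribution. iexp (l * m) * iexp ((l * c) * z))"
    unfolding Gm_def char_def
    by (subst integral_distr) (auto simp: algebra_simps exp_add[symmetric])
  also have "\<dots> = iexp (l * m) * char std_normal_distribution (l * c)"
    unfolding char_def by simp
  also have "\<dots> = iexp (l * m) * of_real (exp (- ((l * c)^2) / 2))"
    by (simp add: char_std_normal_distribution)
  finally show ?thesis .
qed

lemma std_normal_mgf:
  "(\<integral>\<^sup>+z. ennreal (exp (t * z)) \<partial>std_normal_distribution) = ennreal (exp (t^2 / 2))"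
proof -
  have eq: "\<And>z. std_normal_density z * exp (t * z) = exp (t^2/2) * normal_density t 1 z"
    by (simp add: normal_density_def power2_eq_square algebra_simps exp_add[symmetric]
        exp_diff[symmetric] diff_divide_distrib add_divide_distrib)
  have "(\<integral>\<^sup>+z. ennreal (exp (t * z)) \<partial>std_normal_distribution)
      = (\<integral>\<^sup>+z. ennreal (std_normal_density z) * ennreal (exp (t * z)) \<partial>lborel)"
    by (subst nn_integral_density) auto
  also have "\<dots> = (\<integral>\<^sup>+z. ennreal (exp (t^2/2) * normal_density t 1 z) \<partial>lborel)"
    by (intro nn_integral_cong) (simp add: ennreal_mult[symmetric] eq)
  also have "\<dots> = ennreal (\<integral>z. exp (t^2/2) * normal_density t 1 z \<partial>lborel)"
    by (intro nn_integral_eq_integral) auto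
  also have "\<dots> = ennreal (exp (t^2 / 2))" by simp
  finally show ?thesis .
qed

lemma mgf_Gm:
  "(\<integral>\<^sup>+x. ennreal (exp (t * x)) \<partial>Gm m c) = ennreal (exp (t * m + (t * c)^2 / 2))"
proof -
  have "(\<integral>\<^sup>+x. ennreal (exp (t * x)) \<partial>Gm m c)
      = (\<integral>\<^sup>+z. ennreal (exp (t * m)) * ennreal (exp ((t * c) * z)) \<partial>std_normal_distribution)"
    unfolding Gm_def
    by (subst nn_integral_distr) (auto simp: ennreal_mult[symmetric] algebra_simps exp_add[symmetric])
  also have "\<dots> = ennreal (exp (t * m)) * ennreal (exp ((t*c)^2 / 2))"
    by (subst nn_integral_cmult) (auto simp: std_normal_mgf)
  also have "\<dots> = ennreal (exp (t * m + (t * c)^2 / 2))"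
    by (simp add: ennreal_mult[symmetric] exp_add)
  finally show ?thesis .
qed

definition Qm :: "real \<Rightarrow> real measure" where
  "Qm \<alpha> = density lborel (\<lambda>x. ennreal (qd \<alpha> x))"

lemma sets_Qm[simp]: "sets (Qm \<alpha>) = sets borel"
  by (simp add: Qm_def)

lemma qd_real_exp:
  assumes a: "\<alpha> > 0" and t: "t > - \<alpha>"
  shows "has_bochner_integral lborel (\<lambda>x. qd \<alpha> x * exp (t * x)) (\<alpha> / (\<alpha> + t))"
proof -
  have "has_bochner_integral lborel (\<lambda>x. qd \<alpha> x *\<^sub>R exp (complex_of_real t * of_real x)) (\<alpha> / (\<alpha> + t))"
    using qd_cexp[OF a, of "of_real t"] t by simp
  then have H: "has_bochner_integral lborel (\<lambda>x. complex_of_real (qd \<alpha> x * exp (t * x))) (complex_of_real (\<alpha> / (\<alpha> + t)))"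
    by (simp add: scaleR_conv_of_real exp_of_real_mult)
  have i1: "integrable lborel (\<lambda>x. complex_of_real (qd \<alpha> x * exp (t * x)))"
    using H by (rule integrable.intros)
  have i2: "integral\<^sup>L lborel (\<lambda>x. complex_of_real (qd \<alpha> x * exp (t * x))) = complex_of_real (\<alpha> / (\<alpha> + t))"
    using H by (rule has_bochner_integral_integral_eq)
  show ?thesis
    unfolding has_bochner_integral_iff
    using complex_of_real_integrable_eq[THEN iffD1, OF i1] i2 integral_complex_of_real[of lborel "\<lambda>x. qd \<alpha> x * exp (t * x)"]
    by (simp only: of_real_eq_iff)
qed

lemma mgf_Qm:
  assumes a: "\<alpha> > 0" and t: "t > - \<alpha>"
  shows "(\<integral>\<^sup>+x. ennreal (exp (t * x)) \<partial>Qm \<alpha>) = ennreal (\<alpha> / (\<alpha> + t))"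
proof -
  have "(\<integral>\<^sup>+x. ennreal (exp (t * x)) \<partial>Qm \<alpha>) = (\<integral>\<^sup>+x. ennreal (qd \<alpha> x * exp (t * x)) \<partial>lborel)"
    unfolding Qm_def by (subst nn_integral_density) (auto simp: ennreal_mult[symmetric] qd_nonneg[OF a])
  also have "\<dots> = ennreal (\<integral>x. qd \<alpha> x * exp (t * x) \<partial>lborel)"
    using qd_real_exp[OF a t] qd_nonneg[OF a]
    by (intro nn_integral_eq_integral) (auto simp: has_bochner_integral_iff)
  also have "\<dots> = ennreal (\<alpha> / (\<alpha> + t))"
    using qd_real_exp[OF a t] by (simp add: has_bochner_integral_iff)
  finally show ?thesis .
qed

lemma prob_Qm: assumes a: "\<alpha> > 0" shows "prob_space (Qm \<alpha>)"
proof
  have "emeasure (Qm \<alpha>) (space (Qm \<alpha>)) = (\<integral>\<^sup>+x. ennreal (exp (0 * x)) \<partial>Qm \<alpha>)"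
    by simp
  also have "\<dots> = 1" using mgf_Qm[OF a, of 0] a by simp
  finally show "emeasure (Qm \<alpha>) (space (Qm \<alpha>)) = 1" .
qed

lemma char_Qm:
  assumes a: "\<alpha> > 0"
  shows "char (Qm \<alpha>) l = \<alpha> / (\<alpha> + \<i> * l)"
proof -
  have "char (Qm \<alpha>) l = (CLINT x|lborel. qd \<alpha> x *\<^sub>R exp ((\<i> * of_real l) * of_real x))"
    unfolding char_def Qm_def
    by (subst integral_density) (auto simp: qd_nonneg[OF a] algebra_simps)
  also have "\<dots> = \<alpha> / (\<alpha> + \<i> * l)"
    using qd_cexp[OF a, of "\<i> * of_real l"] a by (simp add: has_bochner_integral_iff)
  finally show ?thesis .
qed

lemma Re_integral: "integrable M f \<Longrightarrow> Re (integral\<^sup>L M f) = integral\<^sup>L M (\<lambda>x. Re (f x))"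
  by (rule has_bochner_integral_integral_eq[symmetric], rule has_bochner_integral_Re,
      rule has_bochner_integral_integrable)
lemma Im_integral: "integrable M f \<Longrightarrow> Im (integral\<^sup>L M f) = integral\<^sup>L M (\<lambda>x. Im (f x))"
  by (rule has_bochner_integral_integral_eq[symmetric], rule has_bochner_integral_Im,
      rule has_bochner_integral_integrable)

lemma bind_pmf_facts:
  fixes K :: "'b \<Rightarrow> real measure" and P :: "'b pmf"
  assumes K: "\<And>n. prob_space (K n)" "\<And>n. sets (K n) = sets borel"
  shows "prob_space (measure_pmf P \<bind> K)" "sets (measure_pmf P \<bind> K) = sets borel"
    "K \<in> measurable (measure_pmf P) (subprob_algebra borel)"
proof -
  have A: "measure_pmf P \<in> space (prob_algebra (measure_pmf P))"
    by (simp add: space_prob_algebra measure_pmf.prob_space_axioms)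
  have B: "K \<in> measure_pmf P \<rightarrow>\<^sub>M prob_algebra borel"
    using K by (simp add: space_prob_algebra)
  show "prob_space (measure_pmf P \<bind> K)" by (rule prob_space_bind'[OF A B])
  show "sets (measure_pmf P \<bind> K) = sets borel" by (rule sets_bind'[OF A B])
  show "K \<in> measurable (measure_pmf P) (subprob_algebra borel)"
    using K by (simp add: space_subprob_algebra prob_space_imp_subprob_space)
qed

lemma integral_bind_pmf_complex:
  fixes K :: "'b \<Rightarrow> real measure" and P :: "'b pmf" and f :: "real \<Rightarrow> complex"
  assumes K: "\<And>n. prob_space (K n)" "\<And>n. sets (K n) = sets borel"
    and f[measurable]: "f \<in> borel_measurable borel" and B: "\<And>x. norm (f x) \<le> B"
  shows "integral\<^sup>L (measure_pmf P \<bind> K) f = (\<integral>n. integral\<^sup>L (K n) f \<partial>measure_pmf P)"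
proof -
  note F = bind_pmf_facts[OF K, where P=P]
  interpret bp: prob_space "measure_pmf P \<bind> K" by (rule F(1))
  have KK[measurable]: "K \<in> measurable (measure_pmf P) (subprob_algebra borel)" by (rule F(3))
  have i1: "integrable (measure_pmf P \<bind> K) f"
    by (rule bp.integrable_const_bound[where B=B]) (use B in simp, subst measurable_cong_sets[OF F(2) refl], rule f)
  have iK: "integrable (K n) f" for n
  proof -
    interpret prob_space "K n" by (rule K)
    show "integrable (K n) f"
      by (rule integrable_const_bound[where B=B]) (use B in simp, subst measurable_cong_sets[OF K(2) refl], rule f)
  qed
  have bK: "\<And>n. norm (integral\<^sup>L (K n) f) \<le> B"
  proof -
    fix n
    interpret prob_space "K n" by (rule K)
    have "norm (integral\<^sup>L (K n) f) \<le> integral\<^sup>L (K n) (\<lambda>x. norm (f x))" by (rule integral_norm_bound)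
    also have "\<dots> \<le> integral\<^sup>L (K n) (\<lambda>x. B)"
      using B iK[of n] by (intro integral_mono) auto
    also have "\<dots> = B" by (simp add: prob_space)
    finally show "norm (integral\<^sup>L (K n) f) \<le> B" .
  qed
  have i2: "integrable (measure_pmf P) (\<lambda>n. integral\<^sup>L (K n) f)"
    by (rule measure_pmf.integrable_const_bound[where B=B]) (use bK in auto)
  have "Re (integral\<^sup>L (measure_pmf P \<bind> K) f) = integral\<^sup>L (measure_pmf P \<bind> K) (\<lambda>x. Re (f x))"
    by (rule Re_integral[OF i1])
  also have "\<dots> = (\<integral>n. integral\<^sup>L (K n) (\<lambda>x. Re (f x)) \<partial>measure_pmf P)"
  proof (rule integral_bind[where K=borel and B="B" and B'=1])
    show "(\<lambda>x. Re (f x)) \<in> borel_measurable borel" by measurable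
    show "\<And>x. x \<in> space borel \<Longrightarrow> \<bar>Re (f x)\<bar> \<le> B" using B abs_Re_le_cmod order_trans by blast
    show "K \<in> measurable (measure_pmf P) (subprob_algebra borel)" by (rule KK)
    show "finite_measure (measure_pmf P)" by (rule measure_pmf.finite_measure_axioms)
    show "AE x in measure_pmf P. emeasure (K x) (space (K x)) \<le> ennreal 1"
      using K by (simp add: prob_space.emeasure_space_1)
  qed
  also have "\<dots> = Re (\<integral>n. integral\<^sup>L (K n) f \<partial>measure_pmf P)"
    by (simp add: Re_integral[OF i2] Re_integral[OF iK])
  finally have r: "Re (integral\<^sup>L (measure_pmf P \<bind> K) f) = Re (\<integral>n. integral\<^sup>L (K n) f \<partial>measure_pmf P)" .
  have "Im (integral\<^sup>L (measure_pmf P \<bind> K) f) = integral\<^sup>L (measure_pmf P \<bind> K) (\<lambda>x. Im (f x))"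
    by (rule Im_integral[OF i1])
  also have "\<dots> = (\<integral>n. integral\<^sup>L (K n) (\<lambda>x. Im (f x)) \<partial>measure_pmf P)"
  proof (rule integral_bind[where K=borel and B="B" and B'=1])
    show "(\<lambda>x. Im (f x)) \<in> borel_measurable borel" by measurable
    show "\<And>x. x \<in> space borel \<Longrightarrow> \<bar>Im (f x)\<bar> \<le> B" using B abs_Im_le_cmod order_trans by blast
    show "K \<in> measurable (measure_pmf P) (subprob_algebra borel)" by (rule KK)
    show "finite_measure (measure_pmf P)" by (rule measure_pmf.finite_measure_axioms)
    show "AE x in measure_pmf P. emeasure (K x) (space (K x)) \<le> ennreal 1"
      using K by (simp add: prob_space.emeasure_space_1)
  qed
  also have "\<dots> = Im (\<integral>n. integral\<^sup>L (K n) f \<partial>measure_pmf P)"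
    by (simp add: Im_integral[OF i2] Im_integral[OF iK])
  finally have i: "Im (integral\<^sup>L (measure_pmf P \<bind> K) f) = Im (\<integral>n. integral\<^sup>L (K n) f \<partial>measure_pmf P)" .
  from r i show ?thesis by (simp add: complex_eq_iff)
qed

definition Mi :: "real \<Rightarrow> real \<Rightarrow> real \<Rightarrow> nat \<Rightarrow> real measure" where
  "Mi \<alpha> m c i = (if i = 0 then Gm m c else Qm \<alpha>)"

definition Kn :: "real \<Rightarrow> real \<Rightarrow> real \<Rightarrow> nat \<Rightarrow> real measure" where
  "Kn \<alpha> m c n = distr (PiM {..n} (Mi \<alpha> m c)) borel (\<lambda>x. \<Sum>i\<le>n. x i)"

lemma sets_Mi[simp, measurable_cong]: "sets (Mi \<alpha> m c i) = sets borel"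
  by (simp add: Mi_def)

lemma prob_Mi: "\<alpha> > 0 \<Longrightarrow> prob_space (Mi \<alpha> m c i)"
  by (simp add: Mi_def prob_Gm prob_Qm)

lemma sets_Kn[simp]: "sets (Kn \<alpha> m c n) = sets borel"
  by (simp add: Kn_def)

lemma prod_if0: "(\<Prod>i\<le>n. (if i = 0 then A else B)) = A * B ^ n" for A B :: "'a::comm_monoid_mult"
  by (induction n) (auto simp: mult_ac)

context
  fixes \<alpha> m c :: real assumes a: "\<alpha> > 0"
begin

interpretation P: product_prob_space "Mi \<alpha> m c"
  by (simp add: product_prob_space_def product_prob_space_axioms_def product_sigma_finite_def
      prob_Mi[OF a] prob_space_imp_sigma_finite)

lemma prob_Kn: "prob_space (Kn \<alpha> m c n)"
  unfolding Kn_def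
  by (intro prob_space.prob_space_distr prob_space_PiM) (auto simp: prob_Mi[OF a])

lemma char_Kn: "char (Kn \<alpha> m c n) l = char (Gm m c) l * (char (Qm \<alpha>) l) ^ n"
proof -
  have "char (Kn \<alpha> m c n) l = (CLINT x|PiM {..n} (Mi \<alpha> m c). (\<Prod>i\<le>n. iexp (l * x i)))"
    unfolding char_def Kn_def
    by (subst integral_distr) (auto simp: sum_distrib_left exp_sum[symmetric] sum_distrib_right)
  also have "\<dots> = (\<Prod>i\<le>n. char (Mi \<alpha> m c i) l)"
    unfolding char_def
  proof (rule P.product_integral_prod)
    fix i
    show "integrable (Mi \<alpha> m c i) (\<lambda>x. iexp (l * x))"
      by (rule finite_measure.integrable_const_bound[OF prob_space.axioms(1)[OF prob_Mi[OF a]], where B=1])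
         (auto simp: norm_exp_eq_Re)
  qed simp
  also have "\<dots> = char (Gm m c) l * (char (Qm \<alpha>) l) ^ n"
  proof -
    have "\<And>i. char (Mi \<alpha> m c i) l = (if i = 0 then char (Gm m c) l else char (Qm \<alpha>) l)"
      by (simp add: Mi_def)
    then show ?thesis by (simp only: prod_if0)
  qed
  finally show ?thesis .
qed

lemma mgf_Kn: "(\<integral>\<^sup>+x. ennreal (exp (t * x)) \<partial>Kn \<alpha> m c n)
   = (\<integral>\<^sup>+x. ennreal (exp (t * x)) \<partial>Gm m c) * (\<integral>\<^sup>+x. ennreal (exp (t * x)) \<partial>Qm \<alpha>) ^ n"
proof -
  have "(\<integral>\<^sup>+x. ennreal (exp (t * x)) \<partial>Kn \<alpha> m c n) = (\<integral>\<^sup>+x. (\<Prod>i\<le>n. ennreal (exp (t * x i))) \<partial>PiM {..n} (Mi \<alpha> m c))"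
    unfolding Kn_def
    by (subst nn_integral_distr) (auto simp: sum_distrib_left exp_sum[symmetric] prod_ennreal)
  also have "\<dots> = (\<Prod>i\<le>n. (\<integral>\<^sup>+x. ennreal (exp (t * x)) \<partial>Mi \<alpha> m c i))"
    by (rule P.product_nn_integral_prod) auto
  also have "\<dots> = (\<integral>\<^sup>+x. ennreal (exp (t * x)) \<partial>Gm m c) * (\<integral>\<^sup>+x. ennreal (exp (t * x)) \<partial>Qm \<alpha>) ^ n"
  proof -
    have "\<And>i. (\<integral>\<^sup>+x. ennreal (exp (t * x)) \<partial>Mi \<alpha> m c i) = (if i = 0 then (\<integral>\<^sup>+x. ennreal (exp (t * x)) \<partial>Gm m c) else (\<integral>\<^sup>+x. ennreal (exp (t * x)) \<partial>Qm \<alpha>))"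
      by (simp add: Mi_def)
    then show ?thesis by (simp only: prod_if0)
  qed
  finally show ?thesis .
qed

end

lemma integral_pmf_nat_bounded:
  fixes g :: "nat \<Rightarrow> complex" and P :: "nat pmf"
  assumes B: "\<And>n. norm (g n) \<le> B"
  shows "(\<integral>n. g n \<partial>measure_pmf P) = (\<Sum>n. pmf P n *\<^sub>R g n)"
proof -
  have ig: "integrable (measure_pmf P) g"
    by (rule measure_pmf.integrable_const_bound[where B=B]) (use B in auto)
  have "(\<integral>n. g n \<partial>measure_pmf P) = (\<integral>n. pmf P n *\<^sub>R g n \<partial>count_space UNIV)"
    unfolding measure_pmf_eq_density by (subst integral_density) auto
  also have "\<dots> = (\<Sum>n. pmf P n *\<^sub>R g n)"
  proof (rule integral_count_space_nat)
    show "integrable (count_space UNIV) (\<lambda>n. pmf P n *\<^sub>R g n)"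
      using ig unfolding measure_pmf_eq_density by (subst (asm) integrable_density) auto
  qed
  finally show ?thesis .
qed

definition nu :: "real \<Rightarrow> real \<Rightarrow> real \<Rightarrow> real \<Rightarrow> real measure" where
  "nu \<alpha> m c r = measure_pmf (poisson_pmf r) \<bind> Kn \<alpha> m c"

context
  fixes \<alpha> m c r :: real assumes a: "\<alpha> > 0" and r: "r > 0"
begin

lemma nu_facts: "prob_space (nu \<alpha> m c r)" "sets (nu \<alpha> m c r) = sets borel"
  "Kn \<alpha> m c \<in> measurable (measure_pmf (poisson_pmf r)) (subprob_algebra borel)"
  unfolding nu_def using bind_pmf_facts[of "Kn \<alpha> m c" "poisson_pmf r", OF prob_Kn[OF a] sets_Kn] by auto

lemma char_nu: "char (nu \<alpha> m c r) l = char (Gm m c) l * exp (r * (char (Qm \<alpha>) l - 1))"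
proof -
  have "char (nu \<alpha> m c r) l = (\<integral>n. char (Kn \<alpha> m c n) l \<partial>measure_pmf (poisson_pmf r))"
    unfolding nu_def char_def
    by (rule integral_bind_pmf_complex[OF prob_Kn[OF a] sets_Kn, where B=1]) (auto simp: norm_exp_eq_Re)
  also have "\<dots> = (\<integral>n. char (Gm m c) l * (char (Qm \<alpha>) l) ^ n \<partial>measure_pmf (poisson_pmf r))"
    by (simp add: char_Kn[OF a])
  also have "\<dots> = (\<Sum>n. pmf (poisson_pmf r) n *\<^sub>R (char (Gm m c) l * (char (Qm \<alpha>) l) ^ n))"
  proof (rule integral_pmf_nat_bounded[where B=1])
    fix n
    have "norm (char (Gm m c) l) \<le> 1"
      by (rule real_distribution.cmod_char_le_1) (simp add: real_distribution_def prob_Gm real_distribution_axioms_def)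
    moreover have "norm (char (Qm \<alpha>) l) \<le> 1"
      by (rule real_distribution.cmod_char_le_1) (simp add: real_distribution_def prob_Qm[OF a] real_distribution_axioms_def)
    ultimately show "norm (char (Gm m c) l * (char (Qm \<alpha>) l) ^ n) \<le> 1"
      by (simp add: norm_mult norm_power mult_le_one power_le_one)
  qed
  also have "\<dots> = char (Gm m c) l * exp (r * (char (Qm \<alpha>) l - 1))"
  proof -
    have "(\<lambda>n. (char (Gm m c) l * of_real (exp (-r))) * ((of_real r * char (Qm \<alpha>) l) ^ n /\<^sub>R fact n))
       sums ((char (Gm m c) l * of_real (exp (-r))) * exp (of_real r * char (Qm \<alpha>) l))"
      by (intro sums_mult exp_converges)
    moreover have "\<And>n. (char (Gm m c) l * of_real (exp (-r))) * ((of_real r * char (Qm \<alpha>) l) ^ n /\<^sub>R fact n)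
        = pmf (poisson_pmf r) n *\<^sub>R (char (Gm m c) l * (char (Qm \<alpha>) l) ^ n)"
      using r by (simp add: scaleR_conv_of_real power_mult_distrib divide_inverse mult_ac)
    moreover have "(char (Gm m c) l * of_real (exp (-r))) * exp (of_real r * char (Qm \<alpha>) l)
       = char (Gm m c) l * exp (r * (char (Qm \<alpha>) l - 1))"
      by (simp add: algebra_simps exp_diff exp_of_real[symmetric] exp_minus divide_inverse)
    ultimately show ?thesis by (simp add: sums_iff)
  qed
  finally show ?thesis .
qed

lemma mgf_nu:
  assumes t: "t > - \<alpha>"
  shows "(\<integral>\<^sup>+x. ennreal (exp (t * x)) \<partial>nu \<alpha> m c r)
     = ennreal (exp (t * m + (t * c)^2 / 2) * exp (r * (\<alpha> / (\<alpha> + t) - 1)))"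
proof -
  define G where "G = exp (t * m + (t * c)^2 / 2)"
  define Q where "Q = \<alpha> / (\<alpha> + t)"
  have Q0: "Q \<ge> 0" using a t by (simp add: Q_def)
  have "(\<integral>\<^sup>+x. ennreal (exp (t * x)) \<partial>nu \<alpha> m c r)
      = (\<integral>\<^sup>+n. (\<integral>\<^sup>+x. ennreal (exp (t * x)) \<partial>Kn \<alpha> m c n) \<partial>measure_pmf (poisson_pmf r))"
    unfolding nu_def by (rule nn_integral_bind[OF _ nu_facts(3)]) measurable
  also have "\<dots> = (\<integral>\<^sup>+n. ennreal (G * Q ^ n) \<partial>measure_pmf (poisson_pmf r))"
    using Q0 by (simp add: mgf_Kn[OF a] mgf_Gm mgf_Qm[OF a t] G_def Q_def ennreal_power ennreal_mult)
  also have "\<dots> = (\<Sum>n. ennreal (pmf (poisson_pmf r) n * (G * Q ^ n)))"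
    by (simp add: nn_integral_measure_pmf nn_integral_count_space_nat ennreal_mult[symmetric] G_def Q0)
  also have "\<dots> = ennreal (G * exp (r * (Q - 1)))"
  proof -
    have S: "(\<lambda>n. (G * exp (-r)) * ((r * Q) ^ n /\<^sub>R fact n)) sums ((G * exp (-r)) * exp (r * Q))"
      by (intro sums_mult exp_converges)
    have eq: "\<And>n. (G * exp (-r)) * ((r * Q) ^ n /\<^sub>R fact n) = pmf (poisson_pmf r) n * (G * Q ^ n)"
      using r by (simp add: power_mult_distrib divide_inverse mult_ac)
    have val: "(G * exp (-r)) * exp (r * Q) = G * exp (r * (Q - 1))"
      by (simp add: algebra_simps exp_diff exp_minus divide_inverse)
    have S': "(\<lambda>n. pmf (poisson_pmf r) n * (G * Q ^ n)) sums (G * exp (r * (Q - 1)))"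
      using S unfolding eq val .
    show ?thesis
      using S' Q0 r by (subst suminf_ennreal2) (auto simp: sums_iff G_def)
  qed
  finally show ?thesis by (simp add: G_def Q_def)
qed

end

definition psi :: "real \<Rightarrow> real \<Rightarrow> real \<Rightarrow> real \<Rightarrow> real \<Rightarrow> real" where
  "psi p \<alpha> \<beta> s t = p * t + s * t\<^sup>2 / 2 + \<beta> * (\<alpha> / (\<alpha> + t) - 1)"

locale ruin_setting =
  fixes M :: "'a measure" and X :: "real \<Rightarrow> 'a \<Rightarrow> real" and p \<alpha> \<beta> \<sigma>2 a :: real
  assumes p: "p > 0" and al: "\<alpha> > 0" and be: "\<beta> > 0" and s: "\<sigma>2 > 0"
    and a_def: "a = p + (LINT x|exp_jump_measure \<alpha> \<beta>. x * indicator {y. \<bar>y\<bar> < 1} x)"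
    and levy: "levy_process M X"
    and chars: "has_characteristics M X a \<sigma>2 (exp_jump_measure \<alpha> \<beta>)"
begin

lemma prob: "prob_space M"
  using levy by (simp add: levy_process_def)

sublocale prob_space M by (rule prob)

lemma X_meas[measurable]: "t \<ge> 0 \<Longrightarrow> X t \<in> borel_measurable M"
  using levy by (simp add: levy_process_def)

lemma distr_X: assumes h: "h > 0"
  shows "distr M borel (X h) = nu \<alpha> (h * p) (sqrt (h * \<sigma>2)) (h * \<beta>)"
proof (rule Levy_uniqueness)
  show "real_distribution (distr M borel (X h))"
    using h by (simp add: real_distribution_def real_distribution_axioms_def prob_space_distr)
  show "real_distribution (nu \<alpha> (h * p) (sqrt (h * \<sigma>2)) (h * \<beta>))"
    using nu_facts[OF al, of "h * \<beta>" "h * p" "sqrt (h * \<sigma>2)"] h be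
    by (simp add: real_distribution_def real_distribution_axioms_def)
  show "char (distr M borel (X h)) = char (nu \<alpha> (h * p) (sqrt (h * \<sigma>2)) (h * \<beta>))"
  proof
    fix l
    have "char (distr M borel (X h)) l = exp (complex_of_real h * levy_exponent a \<sigma>2 (exp_jump_measure \<alpha> \<beta>) l)"
      using chars h by (simp add: has_characteristics_def)
    also have "\<dots> = exp (complex_of_real h * (\<i> * of_real (p * l) - of_real (\<sigma>2 / 2 * l\<^sup>2) + \<beta> * \<alpha> / (\<alpha> + \<i> * l) - \<beta>))"
      by (simp add: levy_exponent_explicit[OF al be a_def])
    also have "\<dots> = exp (\<i> * of_real (l * (h * p))) * exp (of_real (- ((l * sqrt (h * \<sigma>2))^2) / 2))
        * exp (of_real (h * \<beta>) * (\<alpha> / (\<alpha> + \<i> * l) - 1))"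
    proof -
      have sq: "(l * sqrt (h * \<sigma>2))^2 = l^2 * h * \<sigma>2" using h s by (simp add: power_mult_distrib)
      show ?thesis
        unfolding exp_add[symmetric] sq by (rule arg_cong[where f=exp]) (simp add: field_simps)
    qed
    also have "\<dots> = char (nu \<alpha> (h * p) (sqrt (h * \<sigma>2)) (h * \<beta>)) l"
      using h be by (simp add: char_nu[OF al] char_Gm char_Qm[OF al] flip: exp_of_real)
    finally show "char (distr M borel (X h)) l = char (nu \<alpha> (h * p) (sqrt (h * \<sigma>2)) (h * \<beta>)) l" .
  qed
qed

lemma mgf_X: assumes h: "h > 0" and t: "t > - \<alpha>"
  shows "(\<integral>\<^sup>+\<omega>. ennreal (exp (t * X h \<omega>)) \<partial>M) = ennreal (exp (h * psi p \<alpha> \<beta> \<sigma>2 t))"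
proof -
  have "(\<integral>\<^sup>+\<omega>. ennreal (exp (t * X h \<omega>)) \<partial>M) = (\<integral>\<^sup>+x. ennreal (exp (t * x)) \<partial>distr M borel (X h))"
    using h by (subst nn_integral_distr) auto
  also have "\<dots> = ennreal (exp (t * (h * p) + (t * sqrt (h * \<sigma>2))^2 / 2) * exp (h * \<beta> * (\<alpha> / (\<alpha> + t) - 1)))"
    unfolding distr_X[OF h] using h be by (intro mgf_nu[OF al _ t]) auto
  also have "\<dots> = ennreal (exp (h * psi p \<alpha> \<beta> \<sigma>2 t))"
  proof -
    have sq: "(t * sqrt (h * \<sigma>2))^2 = t^2 * h * \<sigma>2" using h s by (simp add: power_mult_distrib)
    show ?thesis unfolding sq exp_add[symmetric] psi_def by (simp add: field_simps)
  qed
  finally show ?thesis .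
qed

end

definition Sw :: "nat \<Rightarrow> (nat \<Rightarrow> real) \<Rightarrow> real" where
  "Sw k y = (\<Sum>j<k. y j)"

definition rn :: "nat \<Rightarrow> real \<Rightarrow> (nat \<Rightarrow> real) \<Rightarrow> bool" where
  "rn N u y \<longleftrightarrow> (\<exists>k\<le>N. Sw k y \<le> - u)"

fun Wf :: "real \<Rightarrow> real \<Rightarrow> real \<Rightarrow> nat \<Rightarrow> (nat \<Rightarrow> real) \<Rightarrow> real" where
  "Wf g c u 0 y = exp (- g * u)"
| "Wf g c u (Suc N) y = (if rn N u y then Wf g c u N y else exp (- g * (u + Sw (Suc N) y) - c * Suc N))"

lemma Sw_cong: "(\<And>j. j < k \<Longrightarrow> y j = y' j) \<Longrightarrow> Sw k y = Sw k y'"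
  unfolding Sw_def by (intro sum.cong) auto

lemma rn_cong: "(\<And>j. j < N \<Longrightarrow> y j = y' j) \<Longrightarrow> rn N u y = rn N u y'"
  unfolding rn_def using Sw_cong[of _ y y'] by (metis le_less_trans order_less_le_trans)

lemma Wf_cong: "(\<And>j. j < N \<Longrightarrow> y j = y' j) \<Longrightarrow> Wf g c u N y = Wf g c u N y'"
proof (induction N)
  case (Suc N)
  then show ?case using rn_cong[of N y y' u] Sw_cong[of "Suc N" y y'] by simp
qed simp

lemma Wf_nonruin: "\<not> rn N u y \<Longrightarrow> Wf g c u N y = exp (- g * (u + Sw N y) - c * N)"
proof (induction N)
  case 0 then show ?case by (simp add: Sw_def)
next
  case (Suc N)
  then have "\<not> rn N u y" by (auto simp: rn_def)
  then show ?case by simp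
qed

lemma Wf_ge1: "g \<ge> 0 \<Longrightarrow> c \<le> 0 \<Longrightarrow> rn N u y \<Longrightarrow> Wf g c u N y \<ge> 1"
proof (induction N)
  case 0
  then have "u \<le> 0" by (simp add: rn_def Sw_def)
  then show ?case using 0 by (simp add: mult_nonneg_nonpos)
next
  case (Suc N)
  show ?case
  proof (cases "rn N u y")
    case True then show ?thesis using Suc by simp
  next
    case False
    with Suc.prems obtain k where "k \<le> Suc N" "Sw k y \<le> - u" by (auto simp: rn_def)
    with False have "Sw (Suc N) y \<le> - u" by (metis le_SucE rn_def)
    moreover have "- g * (u + Sw (Suc N) y) \<ge> 0" using calculation Suc.prems by (simp add: mult_nonneg_nonpos)
    moreover have "- c * Suc N \<ge> 0" using Suc.prems by (simp add: mult_nonpos_nonneg)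
    ultimately show ?thesis using False by simp
  qed
qed

lemma Wf_pos: "Wf g c u N y > 0"
  by (induction N) auto

lemma Sw_meas: "k \<le> N \<Longrightarrow> Sw k \<in> borel_measurable (PiM {..<N} (\<lambda>_. borel))"
  unfolding Sw_def by (intro borel_measurable_sum measurable_component_singleton) auto

lemma rn_meas: "N \<le> N' \<Longrightarrow> {y \<in> space (PiM {..<N'} (\<lambda>_. borel)). rn N u y} \<in> sets (PiM {..<N'} (\<lambda>_. borel))"
proof -
  assume N: "N \<le> N'"
  have "{y \<in> space (PiM {..<N'} (\<lambda>_. borel)). rn N u y} = (\<Union>k\<in>{..N}. {y \<in> space (PiM {..<N'} (\<lambda>_. borel)). Sw k y \<le> - u})"
    by (auto simp: rn_def)
  also have "\<dots> \<in> sets (PiM {..<N'} (\<lambda>_. borel))"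
  proof (intro sets.finite_UN)
    fix k assume "k \<in> {..N}"
    then have k: "k \<le> N'" using N by simp
    have "Sw k -` {..- u} \<inter> space (PiM {..<N'} (\<lambda>_. borel)) \<in> sets (PiM {..<N'} (\<lambda>_. borel))"
      by (rule measurable_sets[OF Sw_meas[OF k]]) simp
    moreover have "Sw k -` {..- u} \<inter> space (PiM {..<N'} (\<lambda>_. borel)) = {y \<in> space (PiM {..<N'} (\<lambda>_. borel)). Sw k y \<le> - u}"
      by auto
    ultimately show "{y \<in> space (PiM {..<N'} (\<lambda>_. borel)). Sw k y \<le> - u} \<in> sets (PiM {..<N'} (\<lambda>_. borel))" by simp
  qed simp
  finally show ?thesis .
qed

lemma rn_pred: assumes "N \<le> N'" shows "rn N u \<in> measurable (PiM {..<N'} (\<lambda>_. borel)) (count_space UNIV)"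
  by (subst Measurable.pred_def) (rule rn_meas[OF assms])

lemma Wf_meas: "N \<le> N' \<Longrightarrow> Wf g c u N \<in> borel_measurable (PiM {..<N'} (\<lambda>_. borel))"
proof (induction N)
  case (Suc N)
  have [measurable]: "Sw (Suc N) \<in> borel_measurable (PiM {..<N'} (\<lambda>_. borel))"
    using Suc.prems by (intro Sw_meas)
  have [measurable]: "rn N u \<in> measurable (PiM {..<N'} (\<lambda>_. borel)) (count_space UNIV)"
    by (rule rn_pred) (use Suc.prems in simp)
  have [measurable]: "Wf g c u N \<in> borel_measurable (PiM {..<N'} (\<lambda>_. borel))"
    using Suc by simp
  have "Wf g c u (Suc N) = (\<lambda>y. if rn N u y then Wf g c u N y else exp (- g * (u + Sw (Suc N) y) - c * Suc N))"
    by (rule ext) simp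
  then show ?case by simp
next
  case 0
  have "Wf g c u 0 = (\<lambda>y. exp (- g * u))" by (rule ext) simp
  then show ?case by simp
qed

lemma case_bool_same_borel: "case_bool borel borel = (\<lambda>_::bool. borel)"
  by (rule ext) (simp split: bool.split)

lemma (in prob_space) indep_var_nn_integral_mult:
  fixes X Y :: "'a \<Rightarrow> ennreal"
  assumes "indep_var borel X borel Y"
  shows "(\<integral>\<^sup>+\<omega>. X \<omega> * Y \<omega> \<partial>M) = (\<integral>\<^sup>+\<omega>. X \<omega> \<partial>M) * (\<integral>\<^sup>+\<omega>. Y \<omega> \<partial>M)"
proof -
  have "indep_vars (\<lambda>_. borel) (case_bool X Y) UNIV"
    using assms unfolding indep_var_def case_bool_same_borel .
  from indep_vars_nn_integral[OF _ this] show ?thesis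
    by (simp add: UNIV_bool mult.commute)
qed

definition vv :: "(nat \<Rightarrow> 'a \<Rightarrow> real) \<Rightarrow> nat \<Rightarrow> 'a \<Rightarrow> nat \<Rightarrow> real" where
  "vv \<xi> N \<omega> = restrict (\<lambda>j. \<xi> j \<omega>) {..<N}"

context prob_space
begin

context
  fixes \<xi> :: "nat \<Rightarrow> 'a \<Rightarrow> real" and g c u :: real
  assumes ind: "\<And>N. indep_vars (\<lambda>_. borel) \<xi> {..<N}"
    and mgf: "\<And>k. (\<integral>\<^sup>+\<omega>. ennreal (exp (- g * \<xi> k \<omega>)) \<partial>M) = ennreal (exp c)"
    and g: "g \<ge> 0"
begin

lemma xi_meas: "\<xi> k \<in> borel_measurable M"
  using ind[of "Suc k"] by (auto simp: indep_vars_def)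

lemma vv_meas: "vv \<xi> N \<in> measurable M (PiM {..<N} (\<lambda>_. borel))"
proof -
  note xi_meas[measurable]
  show ?thesis unfolding vv_def by measurable
qed

lemma Wf_vv: "N \<le> N' \<Longrightarrow> Wf g c u N (vv \<xi> N' \<omega>) = Wf g c u N (\<lambda>j. \<xi> j \<omega>)"
  by (rule Wf_cong) (auto simp: vv_def)

lemma rn_vv: "N < N' \<Longrightarrow> rn N u (vv \<xi> N' \<omega>) = rn N u (\<lambda>j. \<xi> j \<omega>)"
  by (rule rn_cong) (auto simp: vv_def)

lemma Wf_xi_meas: "(\<lambda>\<omega>. Wf g c u N (\<lambda>j. \<xi> j \<omega>)) \<in> borel_measurable M"
proof -
  have "(\<lambda>\<omega>. Wf g c u N (vv \<xi> N \<omega>)) \<in> borel_measurable M"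
    using measurable_comp[OF vv_meas Wf_meas[of N N]] by (simp add: comp_def)
  then show ?thesis by (simp add: Wf_vv)
qed

lemma Wf_step: "(\<integral>\<^sup>+\<omega>. ennreal (Wf g c u (Suc N) (\<lambda>j. \<xi> j \<omega>)) \<partial>M)
   = (\<integral>\<^sup>+\<omega>. ennreal (Wf g c u N (\<lambda>j. \<xi> j \<omega>)) \<partial>M)"
proof -
  note xi_meas[measurable] vv_meas[measurable]
  define A where "A y = indicator {y. rn N u y} y * Wf g c u N y" for y
  define B where "B y = indicator {y. \<not> rn N u y} y * Wf g c u N y" for y
  have [measurable]: "rn N u \<in> measurable (PiM {..<Suc N} (\<lambda>_. borel)) (count_space UNIV)"
    by (rule rn_pred) simp
  have [measurable]: "rn N u \<in> measurable (PiM {..<N} (\<lambda>_. borel)) (count_space UNIV)"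
    by (rule rn_pred) simp
  have [measurable]: "Wf g c u N \<in> borel_measurable (PiM {..<N} (\<lambda>_. borel))"
    by (rule Wf_meas) simp
  have Am[measurable]: "A \<in> borel_measurable (PiM {..<N} (\<lambda>_. borel))" unfolding A_def by measurable
  have Bm[measurable]: "B \<in> borel_measurable (PiM {..<N} (\<lambda>_. borel))" unfolding B_def by measurable
  have nnA: "A y \<ge> 0" "B y \<ge> 0" for y using Wf_pos[of g c u N y] by (auto simp: A_def B_def)
  have split: "ennreal (Wf g c u (Suc N) (\<lambda>j. \<xi> j \<omega>)) =
      ennreal (A (vv \<xi> N \<omega>)) + ennreal (B (vv \<xi> N \<omega>)) * ennreal (exp (- g * \<xi> N \<omega>)) * ennreal (exp (- c))" for \<omega>
  proof -
    have "Wf g c u (Suc N) (\<lambda>j. \<xi> j \<omega>) = A (vv \<xi> N \<omega>) + B (vv \<xi> N \<omega>) * exp (- g * \<xi> N \<omega>) * exp (- c)"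
    proof (cases "rn N u (\<lambda>j. \<xi> j \<omega>)")
      case True
      then show ?thesis
        using rn_cong[of N "vv \<xi> N \<omega>" "\<lambda>j. \<xi> j \<omega>" u] Wf_vv[of N N \<omega>]
        by (simp add: A_def B_def vv_def)
    next
      case False
      then have "\<not> rn N u (vv \<xi> N \<omega>)" using rn_cong[of N "vv \<xi> N \<omega>" "\<lambda>j. \<xi> j \<omega>" u] by (simp add: vv_def)
      then show ?thesis
        using False Wf_vv[of N N \<omega>] Wf_nonruin[of N u "\<lambda>j. \<xi> j \<omega>" g]
        by (simp add: A_def B_def Sw_def exp_add[symmetric] algebra_simps)
    qed
    then show ?thesis using nnA by (simp add: ennreal_mult ennreal_plus)
  qed
  have indep: "indep_var borel (\<lambda>\<omega>. ennreal (B (vv \<xi> N \<omega>))) borel (\<lambda>\<omega>. ennreal (exp (- g * \<xi> N \<omega>)))"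
  proof -
    have iv: "indep_var (PiM {..<N} (\<lambda>_. borel)) (\<lambda>\<omega>. restrict (\<lambda>i. \<xi> i \<omega>) {..<N})
                        (PiM {N} (\<lambda>_. borel)) (\<lambda>\<omega>. restrict (\<lambda>i. \<xi> i \<omega>) {N})"
      by (rule indep_var_restrict[OF ind[of "Suc N"]]) auto
    have m2: "(\<lambda>z. ennreal (exp (- g * z N))) \<in> borel_measurable (PiM {N} (\<lambda>_. borel :: real measure))"
      by measurable
    have m1: "(\<lambda>z. ennreal (B z)) \<in> borel_measurable (PiM {..<N} (\<lambda>_. borel))" by measurable
    from indep_var_compose[OF iv m1 m2] show ?thesis by (simp add: comp_def vv_def)
  qed
  have "(\<integral>\<^sup>+\<omega>. ennreal (Wf g c u (Suc N) (\<lambda>j. \<xi> j \<omega>)) \<partial>M)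
      = (\<integral>\<^sup>+\<omega>. ennreal (A (vv \<xi> N \<omega>)) \<partial>M) + (\<integral>\<^sup>+\<omega>. ennreal (B (vv \<xi> N \<omega>)) * ennreal (exp (- g * \<xi> N \<omega>)) * ennreal (exp (- c)) \<partial>M)"
    unfolding split by (rule nn_integral_add) measurable
  also have "(\<integral>\<^sup>+\<omega>. ennreal (B (vv \<xi> N \<omega>)) * ennreal (exp (- g * \<xi> N \<omega>)) * ennreal (exp (- c)) \<partial>M) = (\<integral>\<^sup>+\<omega>. ennreal (B (vv \<xi> N \<omega>)) \<partial>M)"
  proof -
    have "(\<integral>\<^sup>+\<omega>. ennreal (B (vv \<xi> N \<omega>)) * ennreal (exp (- g * \<xi> N \<omega>)) * ennreal (exp (- c)) \<partial>M)
       = (\<integral>\<^sup>+\<omega>. ennreal (B (vv \<xi> N \<omega>)) * ennreal (exp (- g * \<xi> N \<omega>)) \<partial>M) * ennreal (exp (- c))"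
      by (rule nn_integral_multc) measurable
    also have "\<dots> = (\<integral>\<^sup>+\<omega>. ennreal (B (vv \<xi> N \<omega>)) \<partial>M) * (ennreal (exp c) * ennreal (exp (- c)))"
      using indep_var_nn_integral_mult[OF indep] mgf[of N] by (simp add: mult.assoc)
    also have "ennreal (exp c) * ennreal (exp (- c)) = 1"
      by (simp add: ennreal_mult[symmetric] exp_minus_inverse)
    finally show ?thesis by simp
  qed
  also have "(\<integral>\<^sup>+\<omega>. ennreal (A (vv \<xi> N \<omega>)) \<partial>M) + (\<integral>\<^sup>+\<omega>. ennreal (B (vv \<xi> N \<omega>)) \<partial>M)
      = (\<integral>\<^sup>+\<omega>. ennreal (A (vv \<xi> N \<omega>)) + ennreal (B (vv \<xi> N \<omega>)) \<partial>M)"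
    by (rule nn_integral_add[symmetric]) measurable
  also have "\<dots> = (\<integral>\<^sup>+\<omega>. ennreal (Wf g c u N (\<lambda>j. \<xi> j \<omega>)) \<partial>M)"
  proof (rule nn_integral_cong)
    fix \<omega>
    have "A (vv \<xi> N \<omega>) + B (vv \<xi> N \<omega>) = Wf g c u N (vv \<xi> N \<omega>)" by (simp add: A_def B_def indicator_def)
    then show "ennreal (A (vv \<xi> N \<omega>)) + ennreal (B (vv \<xi> N \<omega>)) = ennreal (Wf g c u N (\<lambda>j. \<xi> j \<omega>))"
      using nnA Wf_vv[of N N \<omega>] by (simp add: ennreal_plus[symmetric])
  qed
  finally show ?thesis .
qed

lemma Wf_int: "(\<integral>\<^sup>+\<omega>. ennreal (Wf g c u N (\<lambda>j. \<xi> j \<omega>)) \<partial>M) = ennreal (exp (- g * u))"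
proof (induction N)
  case 0 then show ?case by (simp add: emeasure_space_1)
next
  case (Suc N) then show ?case by (simp only: Wf_step)
qed

lemma rn_xi_sets: "{\<omega> \<in> space M. rn N u (\<lambda>j. \<xi> j \<omega>)} \<in> events"
proof -
  note xi_meas[measurable] vv_meas[measurable]
  have [measurable]: "rn N u \<in> measurable (PiM {..<N} (\<lambda>_. borel)) (count_space UNIV)"
    by (rule rn_pred) simp
  have "{\<omega> \<in> space M. rn N u (vv \<xi> N \<omega>)} \<in> events" by measurable
  moreover have "\<And>\<omega>. rn N u (vv \<xi> N \<omega>) = rn N u (\<lambda>j. \<xi> j \<omega>)"
    by (rule rn_cong) (auto simp: vv_def)
  ultimately show ?thesis by simp
qed

lemma walk_bound: assumes c0: "c \<le> 0" shows "emeasure M {\<omega> \<in> space M. rn N u (\<lambda>j. \<xi> j \<omega>)} \<le> ennreal (exp (- g * u))"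
proof -
  have "emeasure M {\<omega> \<in> space M. rn N u (\<lambda>j. \<xi> j \<omega>)}
      = (\<integral>\<^sup>+\<omega>. indicator {\<omega> \<in> space M. rn N u (\<lambda>j. \<xi> j \<omega>)} \<omega> \<partial>M)"
    by (rule nn_integral_indicator[symmetric, OF rn_xi_sets])
  also have "\<dots> \<le> (\<integral>\<^sup>+\<omega>. ennreal (Wf g c u N (\<lambda>j. \<xi> j \<omega>)) \<partial>M)"
  proof (rule nn_integral_mono)
    fix \<omega>
    show "indicator {\<omega> \<in> space M. rn N u (\<lambda>j. \<xi> j \<omega>)} \<omega> \<le> ennreal (Wf g c u N (\<lambda>j. \<xi> j \<omega>))"
      using Wf_ge1[OF g c0, of N u "\<lambda>j. \<xi> j \<omega>"] by (auto simp: indicator_def)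
  qed
  also have "\<dots> = ennreal (exp (- g * u))" by (rule Wf_int)
  finally show ?thesis .
qed

end
end

lemma rn_mono: "rn N u y \<Longrightarrow> N \<le> N' \<Longrightarrow> rn N' u y"
  unfolding rn_def using order_trans by blast

context prob_space
begin

context
  fixes \<xi> :: "nat \<Rightarrow> 'a \<Rightarrow> real" and g c u K :: real and D :: ennreal
  assumes ind: "\<And>N. indep_vars (\<lambda>_. borel) \<xi> {..<N}"
    and mgf: "\<And>k. (\<integral>\<^sup>+\<omega>. ennreal (exp (- g * \<xi> k \<omega>)) \<partial>M) = ennreal (exp c)"
    and g: "g \<ge> 0" and c: "c \<ge> 0"
    and Dk: "\<And>k. (\<integral>\<^sup>+\<omega>. ennreal (exp (- g * \<xi> k \<omega>)) * indicator {..< -K} (\<xi> k \<omega>) \<partial>M) = D"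
begin

lemmas vvm = vv_meas[OF ind mgf g]
lemmas xim = xi_meas[OF ind mgf g]

lemma indep_last:
  fixes F :: "(nat \<Rightarrow> real) \<Rightarrow> ennreal" and G :: "real \<Rightarrow> ennreal"
  assumes [measurable]: "F \<in> borel_measurable (PiM {..<N} (\<lambda>_. borel))" "G \<in> borel_measurable borel"
  shows "(\<integral>\<^sup>+\<omega>. F (vv \<xi> N \<omega>) * G (\<xi> N \<omega>) \<partial>M) = (\<integral>\<^sup>+\<omega>. F (vv \<xi> N \<omega>) \<partial>M) * (\<integral>\<^sup>+\<omega>. G (\<xi> N \<omega>) \<partial>M)"
proof -
  note vvm[measurable] xim[measurable]
  have iv: "indep_var (PiM {..<N} (\<lambda>_. borel)) (\<lambda>\<omega>. restrict (\<lambda>i. \<xi> i \<omega>) {..<N})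
                      (PiM {N} (\<lambda>_. borel)) (\<lambda>\<omega>. restrict (\<lambda>i. \<xi> i \<omega>) {N})"
    by (rule indep_var_restrict[OF ind[of "Suc N"]]) auto
  have m2: "(\<lambda>z. G (z N)) \<in> borel_measurable (PiM {N} (\<lambda>_. borel :: real measure))"
    by measurable
  from indep_var_compose[OF iv assms(1) m2]
  have "indep_var borel (\<lambda>\<omega>. F (vv \<xi> N \<omega>)) borel (\<lambda>\<omega>. G (\<xi> N \<omega>))"
    by (simp add: comp_def vv_def)
  then show ?thesis by (rule indep_var_nn_integral_mult)
qed

definition Ff :: "nat \<Rightarrow> ennreal" where
  "Ff N = (\<integral>\<^sup>+\<omega>. ennreal (Wf g c u N (\<lambda>j. \<xi> j \<omega>) * indicator {y. rn N u y} (\<lambda>j. \<xi> j \<omega>)) \<partial>M)"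

lemma R_sets: "{\<omega> \<in> space M. rn N u (\<lambda>j. \<xi> j \<omega>)} \<in> events"
  by (rule rn_xi_sets[OF ind mgf g])

lemma F_bound:
  assumes u: "u > 0"
  shows "Ff N \<le> ennreal (exp (g * K)) * emeasure M {\<omega> \<in> space M. rn N u (\<lambda>j. \<xi> j \<omega>)}
          + D * (\<Sum>k<N. ennreal (exp (- c * Suc k)))"
proof (induction N)
  case 0
  have "\<not> rn 0 u y" for y using u by (simp add: rn_def Sw_def)
  then have "Ff 0 = 0" by (simp add: Ff_def)
  then show ?case by simp
next
  case (Suc N)
  note vvm[measurable] xim[measurable]
  define R where "R n = {\<omega> \<in> space M. rn n u (\<lambda>j. \<xi> j \<omega>)}" for n
  have Rs[measurable]: "R n \<in> events" for n unfolding R_def by (rule R_sets)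
  have RN: "R N \<subseteq> R (Suc N)" unfolding R_def rn_def using le_SucI by blast
  have [measurable]: "rn N u \<in> measurable (PiM {..<N} (\<lambda>_. borel)) (count_space UNIV)"
    by (rule rn_pred) simp
  define T1 where "T1 \<omega> = Wf g c u N (\<lambda>j. \<xi> j \<omega>) * indicator {y. rn N u y} (\<lambda>j. \<xi> j \<omega>)" for \<omega>
  define T2 where "T2 \<omega> = exp (g * K) * indicator (R (Suc N) - R N) \<omega>" for \<omega>
  define T3 where "T3 \<omega> = indicator {y. \<not> rn N u y} (vv \<xi> N \<omega>) * (exp (- g * \<xi> N \<omega>) * indicator {..< -K} (\<xi> N \<omega>))
      * exp (- c * Suc N)" for \<omega>
  have T1m[measurable]: "T1 \<in> borel_measurable M"
  proof -
    have "T1 = (\<lambda>\<omega>. Wf g c u N (vv \<xi> N \<omega>) * indicator {y. rn N u y} (vv \<xi> N \<omega>))"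
      using Wf_vv[OF ind mgf g, of N N] rn_cong[of N "vv \<xi> N _" "\<lambda>j. \<xi> j _" u]
      by (auto simp: T1_def vv_def indicator_def fun_eq_iff)
    moreover have [measurable]: "Wf g c u N \<in> borel_measurable (PiM {..<N} (\<lambda>_. borel))"
      by (rule Wf_meas) simp
    ultimately show ?thesis using vv_meas[OF ind mgf g] by simp
  qed
  have T2m[measurable]: "T2 \<in> borel_measurable M" unfolding T2_def by measurable
  have T3m[measurable]: "T3 \<in> borel_measurable M" unfolding T3_def using vv_meas[OF ind mgf g] by measurable
  have nn: "T1 \<omega> \<ge> 0" "T2 \<omega> \<ge> 0" "T3 \<omega> \<ge> 0" for \<omega>
    using Wf_pos[of g c u N "\<lambda>j. \<xi> j \<omega>"] by (auto simp: T1_def T2_def T3_def indicator_def)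
  have pw: "Wf g c u (Suc N) (\<lambda>j. \<xi> j \<omega>) * indicator {y. rn (Suc N) u y} (\<lambda>j. \<xi> j \<omega>)
       \<le> T1 \<omega> + T2 \<omega> + T3 \<omega>" if \<omega>: "\<omega> \<in> space M" for \<omega>
  proof (cases "rn N u (\<lambda>j. \<xi> j \<omega>)")
    case True
    then have "rn (Suc N) u (\<lambda>j. \<xi> j \<omega>)" by (rule rn_mono) simp
    with True show ?thesis using nn[of \<omega>] by (simp add: T1_def)
  next
    case False
    then have vF: "\<not> rn N u (vv \<xi> N \<omega>)" using rn_cong[of N "vv \<xi> N \<omega>" "\<lambda>j. \<xi> j \<omega>" u] by (simp add: vv_def)
    have pos: "u + Sw N (\<lambda>j. \<xi> j \<omega>) > 0" using False by (auto simp: rn_def)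
    show ?thesis
    proof (cases "rn (Suc N) u (\<lambda>j. \<xi> j \<omega>)")
      case False2: False
      then show ?thesis using nn[of \<omega>] by simp
    next
      case True
      have inR: "\<omega> \<in> R (Suc N) - R N" using True False \<omega> by (simp add: R_def)
      have "Wf g c u (Suc N) (\<lambda>j. \<xi> j \<omega>) = exp (- g * (u + Sw N (\<lambda>j. \<xi> j \<omega>)) - g * \<xi> N \<omega> - c * Suc N)"
        using False by (simp add: Sw_def algebra_simps)
      also have "\<dots> \<le> exp (- g * \<xi> N \<omega> - c * Suc N)"
        using pos g by (simp add: mult_nonneg_nonneg)
      finally have W: "Wf g c u (Suc N) (\<lambda>j. \<xi> j \<omega>) \<le> exp (- g * \<xi> N \<omega> - c * Suc N)" .
      show ?thesis
      proof (cases "\<xi> N \<omega> < - K")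
        case True
        have "T3 \<omega> = exp (- g * \<xi> N \<omega> - c * Suc N)"
          using vF True by (simp add: T3_def exp_diff exp_minus divide_inverse)
        then show ?thesis using W True nn[of \<omega>] \<open>rn (Suc N) u _\<close> by simp
      next
        case False
        have h1: "g * (- \<xi> N \<omega>) \<le> g * K" using False g by (intro mult_left_mono) auto
        have h2: "c * Suc N \<ge> 0" using c by simp
        have "exp (- g * \<xi> N \<omega> - c * Suc N) \<le> exp (g * K)"
          using h1 h2 by simp
        moreover have "T2 \<omega> = exp (g * K)" using inR by (simp add: T2_def)
        ultimately have "Wf g c u (Suc N) (\<lambda>j. \<xi> j \<omega>) \<le> T2 \<omega>" using W by linarith
        then show ?thesis using nn[of \<omega>] \<open>rn (Suc N) u _\<close> by simp
      qed
    qed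
  qed
  have "Ff (Suc N) \<le> (\<integral>\<^sup>+\<omega>. ennreal (T1 \<omega> + T2 \<omega> + T3 \<omega>) \<partial>M)"
    unfolding Ff_def
  proof (rule nn_integral_mono)
    fix \<omega> assume "\<omega> \<in> space M"
    then show "ennreal (Wf g c u (Suc N) (\<lambda>j. \<xi> j \<omega>) * indicator {y. rn (Suc N) u y} (\<lambda>j. \<xi> j \<omega>))
       \<le> ennreal (T1 \<omega> + T2 \<omega> + T3 \<omega>)" by (rule ennreal_leI[OF pw])
  qed
  also have "\<dots> = (\<integral>\<^sup>+\<omega>. ennreal (T1 \<omega>) \<partial>M) + (\<integral>\<^sup>+\<omega>. ennreal (T2 \<omega>) \<partial>M) + (\<integral>\<^sup>+\<omega>. ennreal (T3 \<omega>) \<partial>M)"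
    using nn by (simp add: ennreal_plus nn_integral_add add_nonneg_nonneg)
  also have "(\<integral>\<^sup>+\<omega>. ennreal (T1 \<omega>) \<partial>M) = Ff N" by (simp add: Ff_def T1_def)
  also have "(\<integral>\<^sup>+\<omega>. ennreal (T2 \<omega>) \<partial>M) = ennreal (exp (g * K)) * emeasure M (R (Suc N) - R N)"
    by (simp add: T2_def ennreal_mult' ennreal_indicator nn_integral_cmult_indicator)
  also have "(\<integral>\<^sup>+\<omega>. ennreal (T3 \<omega>) \<partial>M) \<le> D * ennreal (exp (- c * Suc N))"
  proof -
    have "(\<integral>\<^sup>+\<omega>. ennreal (T3 \<omega>) \<partial>M) = (\<integral>\<^sup>+\<omega>. (ennreal (indicator {y. \<not> rn N u y} (vv \<xi> N \<omega>))
        * (ennreal (exp (- g * \<xi> N \<omega>)) * indicator {..< -K} (\<xi> N \<omega>))) * ennreal (exp (- c * Suc N)) \<partial>M)"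
      by (intro nn_integral_cong) (simp add: T3_def ennreal_mult' ennreal_indicator mult.assoc)
    also have "\<dots> = (\<integral>\<^sup>+\<omega>. ennreal (indicator {y. \<not> rn N u y} (vv \<xi> N \<omega>))
        * (ennreal (exp (- g * \<xi> N \<omega>)) * indicator {..< -K} (\<xi> N \<omega>)) \<partial>M) * ennreal (exp (- c * Suc N))"
      by (rule nn_integral_multc) (use vv_meas[OF ind mgf g] in measurable)
    also have "(\<integral>\<^sup>+\<omega>. ennreal (indicator {y. \<not> rn N u y} (vv \<xi> N \<omega>))
        * (ennreal (exp (- g * \<xi> N \<omega>)) * indicator {..< -K} (\<xi> N \<omega>)) \<partial>M)
       = (\<integral>\<^sup>+\<omega>. ennreal (indicator {y. \<not> rn N u y} (vv \<xi> N \<omega>)) \<partial>M) * D"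
    proof -
      have m1: "(\<lambda>z. ennreal (indicator {y. \<not> rn N u y} z)) \<in> borel_measurable (PiM {..<N} (\<lambda>_. borel))"
        by measurable
      have m2: "(\<lambda>x. ennreal (exp (- g * x)) * indicator {..< -K} x) \<in> borel_measurable (borel :: real measure)"
        by measurable
      show ?thesis
        using indep_last[OF m1 m2] Dk[of N] by simp
    qed
    finally have eq3: "(\<integral>\<^sup>+\<omega>. ennreal (T3 \<omega>) \<partial>M) = (\<integral>\<^sup>+\<omega>. ennreal (indicator {y. \<not> rn N u y} (vv \<xi> N \<omega>)) \<partial>M) * D * ennreal (exp (- c * Suc N))" .
    have le1: "(\<integral>\<^sup>+\<omega>. ennreal (indicator {y. \<not> rn N u y} (vv \<xi> N \<omega>)) \<partial>M) \<le> 1"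
    proof -
      have "(\<integral>\<^sup>+\<omega>. ennreal (indicator {y. \<not> rn N u y} (vv \<xi> N \<omega>)) \<partial>M) \<le> (\<integral>\<^sup>+\<omega>. 1 \<partial>M)"
        by (intro nn_integral_mono) (auto simp: indicator_def)
      then show ?thesis by (simp add: emeasure_space_1)
    qed
    show ?thesis unfolding eq3
      using mult_right_mono[OF mult_right_mono[OF le1, of D], of "ennreal (exp (- c * Suc N))"] by simp
  qed
  finally have st: "Ff (Suc N) \<le> Ff N + ennreal (exp (g * K)) * emeasure M (R (Suc N) - R N)
       + D * ennreal (exp (- c * Suc N))" by (simp add: add_mono)
  have IH: "Ff N \<le> ennreal (exp (g * K)) * emeasure M (R N) + D * (\<Sum>k<N. ennreal (exp (- c * Suc k)))"
    using Suc.IH by (simp add: R_def)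
  have em: "emeasure M (R N) + emeasure M (R (Suc N) - R N) = emeasure M (R (Suc N))"
  proof -
    have "emeasure M (R N) + emeasure M (R (Suc N) - R N) = emeasure M (R N \<union> (R (Suc N) - R N))"
      by (rule plus_emeasure) auto
    also have "R N \<union> (R (Suc N) - R N) = R (Suc N)" using RN by auto
    finally show ?thesis .
  qed
  have "Ff (Suc N) \<le> ennreal (exp (g * K)) * emeasure M (R N) + D * (\<Sum>k<N. ennreal (exp (- c * Suc k)))
       + ennreal (exp (g * K)) * emeasure M (R (Suc N) - R N) + D * ennreal (exp (- c * Suc N))"
    using st IH by (meson add_right_mono order_trans)
  also have "\<dots> = ennreal (exp (g * K)) * (emeasure M (R N) + emeasure M (R (Suc N) - R N))
       + D * ((\<Sum>k<N. ennreal (exp (- c * Suc k))) + ennreal (exp (- c * Suc N)))"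
    by (simp add: distrib_left add_ac)
  also have "\<dots> = ennreal (exp (g * K)) * emeasure M (R (Suc N)) + D * (\<Sum>k<Suc N. ennreal (exp (- c * Suc k)))"
    by (simp add: em)
  finally show ?case by (simp add: R_def)
qed

end
end

lemma geom_bound: fixes c :: real assumes c: "c > 0"
  shows "(\<Sum>k<N. exp (- c * Suc k)) \<le> 1 / c"
proof -
  have q: "exp (- c) < 1" "exp (-c) > 0" using c by auto
  have "(\<Sum>k<N. exp (- c * Suc k)) = exp (-c) * (\<Sum>k<N. exp (-c) ^ k)"
    by (simp add: sum_distrib_left exp_of_nat_mult[symmetric] mult.commute exp_add[symmetric] algebra_simps)
  also have "\<dots> = exp (-c) * ((1 - exp (-c) ^ N) / (1 - exp (-c)))"
    using q by (subst sum_gp_strict) auto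
  also have "\<dots> \<le> exp (-c) * (1 / (1 - exp (-c)))"
    using q by (intro mult_left_mono divide_right_mono) auto
  also have "\<dots> = 1 / (exp c - 1)"
    using q by (simp add: exp_minus field_simps)
  also have "\<dots> \<le> 1 / c"
  proof -
    have "c \<le> exp c - 1" using exp_ge_add_one_self[of c] by linarith
    then show ?thesis using c by (intro divide_left_mono) auto
  qed
  finally show ?thesis .
qed

context prob_space
begin

context
  fixes \<xi> :: "nat \<Rightarrow> 'a \<Rightarrow> real" and g c u K :: real and D :: ennreal
  assumes ind: "\<And>N. indep_vars (\<lambda>_. borel) \<xi> {..<N}"
    and mgf: "\<And>k. (\<integral>\<^sup>+\<omega>. ennreal (exp (- g * \<xi> k \<omega>)) \<partial>M) = ennreal (exp c)"
    and g: "g \<ge> 0" and c: "c > 0"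
    and Dk: "\<And>k. (\<integral>\<^sup>+\<omega>. ennreal (exp (- g * \<xi> k \<omega>)) * indicator {..< -K} (\<xi> k \<omega>) \<partial>M) = D"
    and u: "u > 0"
begin

lemma D_fin: "D \<le> ennreal (exp c)"
proof -
  have "D \<le> (\<integral>\<^sup>+\<omega>. ennreal (exp (- g * \<xi> 0 \<omega>)) \<partial>M)"
    unfolding Dk[of 0, symmetric] by (intro nn_integral_mono) (auto simp: indicator_def)
  then show ?thesis using mgf[of 0] by simp
qed

lemma walk_lower:
  "exp (- g * u) \<le> exp (g * K) * prob (\<Union>N. {\<omega> \<in> space M. rn N u (\<lambda>j. \<xi> j \<omega>)}) + enn2real D / c"
proof -
  define R where "R N = {\<omega> \<in> space M. rn N u (\<lambda>j. \<xi> j \<omega>)}" for N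
  have Rs: "R N \<in> events" for N unfolding R_def by (rule rn_xi_sets[OF ind mgf g])
  have "D < \<top>" using D_fin by (metis ennreal_less_top le_less_trans)
  then have Dr: "D = ennreal (enn2real D)" by (simp add: ennreal_enn2real)
  have bound: "exp (- g * u) \<le> exp (g * K) * prob (\<Union>N. R N) + enn2real D / c + exp (- c * N)" for N :: nat
  proof -
    note xi_meas[OF ind mgf g, measurable]
    have "ennreal (exp (- g * u)) = (\<integral>\<^sup>+\<omega>. ennreal (Wf g c u N (\<lambda>j. \<xi> j \<omega>)) \<partial>M)"
      by (rule Wf_int[OF ind mgf g, symmetric])
    also have "\<dots> = (\<integral>\<^sup>+\<omega>. ennreal (Wf g c u N (\<lambda>j. \<xi> j \<omega>) * indicator {y. rn N u y} (\<lambda>j. \<xi> j \<omega>))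
        + ennreal (Wf g c u N (\<lambda>j. \<xi> j \<omega>) * indicator {y. \<not> rn N u y} (\<lambda>j. \<xi> j \<omega>)) \<partial>M)"
      by (intro nn_integral_cong) (simp add: indicator_def)
    also have "\<dots> = Ff \<xi> g c u N + (\<integral>\<^sup>+\<omega>. ennreal (Wf g c u N (\<lambda>j. \<xi> j \<omega>) * indicator {y. \<not> rn N u y} (\<lambda>j. \<xi> j \<omega>)) \<partial>M)"
      unfolding Ff_def[OF ind mgf g c[THEN less_imp_le] Dk]
    proof (rule nn_integral_add)
      note vv_meas[OF ind mgf g, measurable]
      have [measurable]: "rn N u \<in> measurable (PiM {..<N} (\<lambda>_. borel)) (count_space UNIV)"
        by (rule rn_pred) simp
      have [measurable]: "Wf g c u N \<in> borel_measurable (PiM {..<N} (\<lambda>_. borel))"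
        by (rule Wf_meas) simp
      have e1: "Wf g c u N (\<lambda>j. \<xi> j \<omega>) = Wf g c u N (vv \<xi> N \<omega>)" for \<omega>
        by (rule Wf_cong) (simp add: vv_def)
      have e2: "rn N u (\<lambda>j. \<xi> j \<omega>) = rn N u (vv \<xi> N \<omega>)" for \<omega>
        by (rule rn_cong) (simp add: vv_def)
      have "(\<lambda>\<omega>. ennreal (Wf g c u N (vv \<xi> N \<omega>) * indicator {y. rn N u y} (vv \<xi> N \<omega>))) \<in> borel_measurable M"
        by measurable
      then show "(\<lambda>\<omega>. ennreal (Wf g c u N (\<lambda>j. \<xi> j \<omega>) * indicator {y. rn N u y} (\<lambda>j. \<xi> j \<omega>))) \<in> borel_measurable M"
        by (simp add: e1 e2 indicator_def)
      have "(\<lambda>\<omega>. ennreal (Wf g c u N (vv \<xi> N \<omega>) * indicator {y. \<not> rn N u y} (vv \<xi> N \<omega>))) \<in> borel_measurable M"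
        by measurable
      then show "(\<lambda>\<omega>. ennreal (Wf g c u N (\<lambda>j. \<xi> j \<omega>) * indicator {y. \<not> rn N u y} (\<lambda>j. \<xi> j \<omega>))) \<in> borel_measurable M"
        by (simp add: e1 e2 indicator_def)
    qed
    also have "\<dots> \<le> (ennreal (exp (g * K)) * emeasure M (R N) + D * (\<Sum>k<N. ennreal (exp (- c * Suc k))))
        + ennreal (exp (- c * N))"
    proof (rule add_mono)
      show "Ff \<xi> g c u N \<le> ennreal (exp (g * K)) * emeasure M (R N) + D * (\<Sum>k<N. ennreal (exp (- c * Suc k)))"
        unfolding R_def by (rule F_bound[OF ind mgf g c[THEN less_imp_le] Dk u])
      have "(\<integral>\<^sup>+\<omega>. ennreal (Wf g c u N (\<lambda>j. \<xi> j \<omega>) * indicator {y. \<not> rn N u y} (\<lambda>j. \<xi> j \<omega>)) \<partial>M)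
          \<le> (\<integral>\<^sup>+\<omega>. ennreal (exp (- c * N)) \<partial>M)"
      proof (rule nn_integral_mono)
        fix \<omega>
        show "ennreal (Wf g c u N (\<lambda>j. \<xi> j \<omega>) * indicator {y. \<not> rn N u y} (\<lambda>j. \<xi> j \<omega>)) \<le> ennreal (exp (- c * N))"
        proof (cases "rn N u (\<lambda>j. \<xi> j \<omega>)")
          case False
          then have "u + Sw N (\<lambda>j. \<xi> j \<omega>) > 0" by (auto simp: rn_def)
          then have "- g * (u + Sw N (\<lambda>j. \<xi> j \<omega>)) \<le> 0" using g by (simp add: mult_nonneg_nonneg)
          then show ?thesis using False by (simp add: Wf_nonruin)
        qed simp
      qed
      then show "(\<integral>\<^sup>+\<omega>. ennreal (Wf g c u N (\<lambda>j. \<xi> j \<omega>) * indicator {y. \<not> rn N u y} (\<lambda>j. \<xi> j \<omega>)) \<partial>M)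
          \<le> ennreal (exp (- c * N))" by (simp add: emeasure_space_1)
    qed
    also have "\<dots> \<le> ennreal (exp (g * K) * prob (\<Union>N. R N) + enn2real D / c + exp (- c * N))"
    proof -
      have "prob (R N) \<le> prob (\<Union>N. R N)"
        using Rs by (intro finite_measure_mono) auto
      then have 1: "ennreal (exp (g * K)) * emeasure M (R N) \<le> ennreal (exp (g * K) * prob (\<Union>N. R N))"
        by (simp add: emeasure_eq_measure Rs ennreal_mult'[symmetric])
      have "enn2real D * (\<Sum>k<N. exp (- c * Suc k)) \<le> enn2real D * (1 / c)"
        using geom_bound[OF c, of N] by (intro mult_left_mono) auto
      then have 2: "D * (\<Sum>k<N. ennreal (exp (- c * Suc k))) \<le> ennreal (enn2real D / c)"
        by (subst Dr, subst sum_ennreal) (auto simp: ennreal_mult'[symmetric] intro!: ennreal_leI)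
      have "ennreal (exp (g * K)) * emeasure M (R N) + D * (\<Sum>k<N. ennreal (exp (- c * Suc k))) + ennreal (exp (- c * N))
        \<le> ennreal (exp (g * K) * prob (\<Union>N. R N)) + ennreal (enn2real D / c) + ennreal (exp (- c * N))"
        using 1 2 by (intro add_mono) auto
      also have "\<dots> = ennreal (exp (g * K) * prob (\<Union>N. R N) + enn2real D / c + exp (- c * N))"
      proof -
        have a: "exp (g * K) * prob (\<Union>N. R N) \<ge> 0" by simp
        have b: "enn2real D / c \<ge> 0" using c by simp
        show ?thesis using a b by (simp add: add_nonneg_nonneg)
      qed
      finally show ?thesis .
    qed
    finally show ?thesis using c
      by (subst (asm) ennreal_le_iff) (auto intro!: add_nonneg_nonneg mult_nonneg_nonneg divide_nonneg_pos)
  qed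
  have "((\<lambda>N. exp (g * K) * prob (\<Union>N. R N) + enn2real D / c + exp (- c * real N)) \<longlongrightarrow>
        exp (g * K) * prob (\<Union>N. R N) + enn2real D / c + 0) sequentially"
    using c by (intro tendsto_add tendsto_const) real_asymp
  then show ?thesis
    using bound unfolding R_def by (intro tendsto_lowerbound) (auto intro: always_eventually)
qed

end
end

context ruin_setting
begin

definition xh :: "real \<Rightarrow> nat \<Rightarrow> 'a \<Rightarrow> real" where
  "xh h k \<omega> = X (real (Suc k) * h) \<omega> - X (real k * h) \<omega>"

lemma xh_indep: assumes h: "h > 0" shows "indep_vars (\<lambda>_. borel) (xh h) {..<N}"
proof -
  have "indep_vars (\<lambda>_. borel) (\<lambda>k \<omega>. X ((\<lambda>k. real k * h) (Suc k)) \<omega> - X ((\<lambda>k. real k * h) k) \<omega>) {..<N}"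
  proof -
    have I: "\<forall>(n::nat) (t::nat \<Rightarrow> real). 0 \<le> t 0 \<and> (\<forall>k<n. t k < t (Suc k)) \<longrightarrow>
        indep_vars (\<lambda>_. borel) (\<lambda>k \<omega>. X (t (Suc k)) \<omega> - X (t k) \<omega>) {..<n}"
      using levy unfolding levy_process_def by blast
    have "\<forall>k<N. real k * h < real (Suc k) * h" using h by simp
    then show ?thesis using I[rule_format, of "\<lambda>k. real k * h" N] by simp
  qed
  then show ?thesis by (simp add: xh_def[abs_def])
qed

lemma xh_distr: assumes h: "h > 0" shows "distr M borel (xh h k) = distr M borel (X h)"
proof -
  have "distr M borel (\<lambda>\<omega>. X (real (Suc k) * h) \<omega> - X (real k * h) \<omega>) = distr M borel (X (real (Suc k) * h - real k * h))"
    using levy h unfolding levy_process_def by (auto intro!: mult_right_mono)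
  moreover have "real (Suc k) * h - real k * h = h" by (simp add: algebra_simps)
  ultimately show ?thesis by (simp add: xh_def[abs_def])
qed

lemma xh_meas[measurable]: "h > 0 \<Longrightarrow> xh h k \<in> borel_measurable M"
  unfolding xh_def by (intro borel_measurable_diff X_meas) auto

lemma xh_nn_integral: assumes h: "h > 0" and f[measurable]: "f \<in> borel_measurable borel"
  shows "(\<integral>\<^sup>+\<omega>. f (xh h k \<omega>) \<partial>M) = (\<integral>\<^sup>+x. f x \<partial>distr M borel (X h))"
proof -
  have "(\<integral>\<^sup>+\<omega>. f (xh h k \<omega>) \<partial>M) = (\<integral>\<^sup>+x. f x \<partial>distr M borel (xh h k))"
    using h by (subst nn_integral_distr) auto
  then show ?thesis by (simp add: xh_distr[OF h])
qed

lemma xh_mgf: assumes h: "h > 0" and t: "t > - \<alpha>"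
  shows "(\<integral>\<^sup>+\<omega>. ennreal (exp (t * xh h k \<omega>)) \<partial>M) = ennreal (exp (h * psi p \<alpha> \<beta> \<sigma>2 t))"
proof -
  have "(\<integral>\<^sup>+\<omega>. ennreal (exp (t * xh h k \<omega>)) \<partial>M) = (\<integral>\<^sup>+x. ennreal (exp (t * x)) \<partial>distr M borel (X h))"
    by (rule xh_nn_integral[OF h, where f="\<lambda>x. ennreal (exp (t * x))"]) measurable
  also have "\<dots> = (\<integral>\<^sup>+\<omega>. ennreal (exp (t * X h \<omega>)) \<partial>M)"
    using h by (subst nn_integral_distr) auto
  also have "\<dots> = ennreal (exp (h * psi p \<alpha> \<beta> \<sigma>2 t))" by (rule mgf_X[OF h t])
  finally show ?thesis .
qed

lemma Sw_xh: "Sw k (\<lambda>j. xh h j \<omega>) = X (real k * h) \<omega> - X 0 \<omega>"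
  unfolding Sw_def xh_def
  by (subst sum_lessThan_telescope[where f="\<lambda>j. X (real j * h) \<omega>"]) simp

lemma X0: "AE \<omega> in M. X 0 \<omega> = 0"
  using levy by (simp add: levy_process_def)

end

lemma gamma_facts:
  fixes p \<alpha> \<beta> s :: real
  assumes p: "p > 0" and a: "\<alpha> > 0" and b: "\<beta> > 0" and s: "s > 0" and pb: "p > \<beta> / \<alpha>"
  defines "\<gamma> \<equiv> (s * \<alpha> + 2 * p - sqrt ((s * \<alpha> - 2 * p)\<^sup>2 + 8 * s * \<beta>)) / (2 * s)"
  shows "0 < \<gamma>" "\<gamma> < \<alpha>" "psi p \<alpha> \<beta> s (- \<gamma>) = 0"
proof -
  define D where "D = (s * \<alpha> - 2 * p)\<^sup>2 + 8 * s * \<beta>"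
  define S where "S = sqrt D"
  define A where "A = s * \<alpha> + 2 * p"
  have D0: "D \<ge> 0" unfolding D_def using s b by (simp add: add_nonneg_nonneg)
  have S0: "S \<ge> 0" and SS: "S^2 = D" using D0 by (auto simp: S_def)
  have g: "\<gamma> = (A - S) / (2 * s)" by (simp add: \<gamma>_def A_def S_def D_def)
  have pa: "p * \<alpha> > \<beta>" using pb a by (simp add: field_simps)
  have A0: "A > 0" using s a p by (simp add: A_def add_pos_pos)
  have "D < A^2" unfolding D_def A_def using pa s by (simp add: power2_eq_square algebra_simps)
  then have "S < A" using power2_less_imp_less[of S A] A0 SS by simp
  then show g0: "0 < \<gamma>" unfolding g using s by simp
  have "2 * p - s * \<alpha> < S"
  proof (cases "2 * p - s * \<alpha> < 0")
    case True then show ?thesis using S0 by linarith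
  next
    case False
    have "(2 * p - s * \<alpha>)^2 < S^2" unfolding SS D_def using s b by (simp add: power2_commute)
    then show ?thesis using power2_less_imp_less[of "2 * p - s * \<alpha>" S] S0 by simp
  qed
  then show ga: "\<gamma> < \<alpha>" unfolding g using s by (simp add: A_def field_simps)
  have quad: "s * \<gamma>^2 - A * \<gamma> + 2 * (p * \<alpha> - \<beta>) = 0"
  proof -
    have "s * \<gamma>^2 - A * \<gamma> + 2 * (p * \<alpha> - \<beta>) = (S^2 - A^2 + 8 * s * (p * \<alpha> - \<beta>)) / (4 * s)"
      unfolding g using s by (simp add: field_simps power2_eq_square)
    also have "S^2 - A^2 + 8 * s * (p * \<alpha> - \<beta>) = 0"
      unfolding SS D_def A_def by (simp add: power2_eq_square algebra_simps)
    finally show ?thesis by simp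
  qed
  have am: "\<alpha> - \<gamma> > 0" using ga by simp
  have "psi p \<alpha> \<beta> s (- \<gamma>) = \<gamma> / (2 * (\<alpha> - \<gamma>)) * (- (s * \<gamma>^2 - A * \<gamma> + 2 * (p * \<alpha> - \<beta>)))"
    unfolding psi_def A_def using am by (simp add: field_simps power2_eq_square)
  then show "psi p \<alpha> \<beta> s (- \<gamma>) = 0" using quad by simp
qed

context ruin_setting
begin

lemma grid_bound:
  assumes h: "h > 0" and g: "g > 0" "g < \<alpha>" and z: "psi p \<alpha> \<beta> \<sigma>2 (- g) = 0"
  shows "emeasure M {\<omega> \<in> space M. \<exists>k\<le>N. X (real k * h) \<omega> \<le> - u} \<le> ennreal (exp (- g * u))"
proof -
  have mgf: "(\<integral>\<^sup>+\<omega>. ennreal (exp (- g * xh h k \<omega>)) \<partial>M) = ennreal (exp 0)" for k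
    using xh_mgf[OF h, of "- g" k] g z by simp
  have "emeasure M {\<omega> \<in> space M. \<exists>k\<le>N. X (real k * h) \<omega> \<le> - u}
      \<le> emeasure M {\<omega> \<in> space M. rn N u (\<lambda>j. xh h j \<omega>)}"
  proof (rule emeasure_mono_AE)
    show "{\<omega> \<in> space M. rn N u (\<lambda>j. xh h j \<omega>)} \<in> events"
      by (rule rn_xi_sets[OF xh_indep[OF h] mgf]) (use g in simp)
    show "AE \<omega> in M. \<omega> \<in> {\<omega> \<in> space M. \<exists>k\<le>N. X (real k * h) \<omega> \<le> - u} \<longrightarrow>
        \<omega> \<in> {\<omega> \<in> space M. rn N u (\<lambda>j. xh h j \<omega>)}"
      using X0 by eventually_elim (auto simp: rn_def Sw_xh)
  qed
  also have "\<dots> \<le> ennreal (exp (- g * u))"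
    by (rule walk_bound[OF xh_indep[OF h] mgf]) (use g in auto)
  finally show ?thesis .
qed

end

lemma ruin_time_finite_iff: "ruin_time X u \<omega> < \<infinity> \<longleftrightarrow> (\<exists>t\<ge>0. X t \<omega> \<le> - u)"
  by (auto simp: ruin_time_def)

lemma ruin_time_finite_iff': "ruin_time X u \<omega> \<noteq> \<infinity> \<longleftrightarrow> (\<exists>t\<ge>0. X t \<omega> \<le> - u)"
  by (auto simp: ruin_time_def)

lemma cadlag_dyadic:
  assumes c: "cadlag f" and t: "t \<ge> 0" and ft: "f t \<le> - u" and e: "e > 0"
  shows "\<exists>n k. k \<le> 4 ^ n \<and> f (real k * (1 / 2 ^ n)) \<le> - (u - e)"
proof -
  have "(f \<longlongrightarrow> f t) (at_right t)" using c t by (simp add: cadlag_def continuous_within)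
  then have "\<forall>\<^sub>F s in at_right t. dist (f s) (f t) < e" using e by (rule tendstoD)
  then obtain b where b: "b > t" and bb: "\<And>s. t < s \<Longrightarrow> s < b \<Longrightarrow> dist (f s) (f t) < e"
    by (auto simp: eventually_at_right_field)
  obtain n :: nat where n1: "1 / 2 ^ n < b - t" and n2: "t + 1 \<le> 2 ^ n"
  proof -
    obtain n1 :: nat where "1 / 2 ^ n1 < b - t"
      using real_arch_pow_inv[of "b - t" "1/2"] b by (auto simp: power_one_over)
    moreover obtain n2 :: nat where "t + 1 < 2 ^ n2"
      using real_arch_pow[of 2 "t + 1"] by auto
    ultimately show ?thesis
      by (intro that[of "max n1 n2"])
         (auto intro: order.strict_trans1[rotated] order_trans[OF less_imp_le]
           simp: power_increasing divide_le_eq_1 frac_le)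
  qed
  define k where "k = nat (floor (t * 2 ^ n)) + 1"
  have fl: "real (nat (floor (t * 2 ^ n))) \<le> t * 2 ^ n" "t * 2 ^ n < real (nat (floor (t * 2 ^ n))) + 1"
    using t by (auto simp: of_nat_nat)
  have s1: "t < real k * (1 / 2 ^ n)" using fl by (simp add: k_def field_simps)
  have s2: "real k * (1 / 2 ^ n) < b"
  proof -
    have "real k * (1 / 2 ^ n) \<le> t + 1 / 2 ^ n" using fl by (simp add: k_def field_simps)
    then show ?thesis using n1 by simp
  qed
  have kb: "k \<le> 4 ^ n"
  proof -
    have "real k \<le> t * 2 ^ n + 1" using fl by (simp add: k_def)
    also have "\<dots> \<le> (t + 1) * 2 ^ n" by (simp add: algebra_simps)
    also have "\<dots> \<le> 2 ^ n * 2 ^ n" using n2 by (intro mult_right_mono) auto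
    also have "\<dots> = real (4 ^ n)" by (simp add: power_mult_distrib[symmetric])
    finally show ?thesis by linarith
  qed
  have "dist (f (real k * (1 / 2 ^ n))) (f t) < e" using bb s1 s2 by simp
  then have "f (real k * (1 / 2 ^ n)) \<le> - (u - e)" using ft by (simp add: dist_real_def abs_less_iff)
  with kb show ?thesis by blast
qed

context ruin_setting
begin

definition En :: "real \<Rightarrow> nat \<Rightarrow> 'a set" where
  "En v n = {\<omega> \<in> space M. \<exists>k\<le>4 ^ n. X (real k * (1 / 2 ^ n)) \<omega> \<le> - v}"

lemma En_sets: "En v n \<in> events"
proof -
  have "En v n = (\<Union>k\<in>{..4 ^ n}. {\<omega> \<in> space M. X (real k * (1 / 2 ^ n)) \<omega> \<le> - v})"
    by (auto simp: En_def)
  also have "\<dots> \<in> events"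
  proof (intro sets.finite_UN)
    fix k :: nat
    have [measurable]: "X (real k * (1 / 2 ^ n)) \<in> borel_measurable M" by (rule X_meas) simp
    show "{\<omega> \<in> space M. X (real k * (1 / 2 ^ n)) \<omega> \<le> - v} \<in> events" by measurable
  qed simp
  finally show ?thesis .
qed

lemma En_mono: "incseq (En v)"
proof (rule incseq_SucI)
  fix n
  show "En v n \<subseteq> En v (Suc n)"
  proof
    fix \<omega> assume "\<omega> \<in> En v n"
    then obtain k where k: "k \<le> 4 ^ n" "X (real k * (1 / 2 ^ n)) \<omega> \<le> - v" and \<omega>: "\<omega> \<in> space M"
      by (auto simp: En_def)
    have "2 * k \<le> 4 ^ Suc n" using k by simp
    moreover have "real (2 * k) * (1 / 2 ^ Suc n) = real k * (1 / 2 ^ n)" by simp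
    ultimately show "\<omega> \<in> En v (Suc n)" using k \<omega> unfolding En_def by (metis (mono_tags, lifting) mem_Collect_eq)
  qed
qed

lemma Ev_bound:
  assumes g: "g > 0" "g < \<alpha>" and z: "psi p \<alpha> \<beta> \<sigma>2 (- g) = 0"
  shows "emeasure M (\<Union>n. En v n) \<le> ennreal (exp (- g * v))"
proof -
  have "emeasure M (\<Union>n. En v n) = (SUP n. emeasure M (En v n))"
    by (rule SUP_emeasure_incseq[symmetric]) (use En_sets En_mono in auto)
  also have "\<dots> \<le> ennreal (exp (- g * v))"
  proof (rule SUP_least)
    fix n
    show "emeasure M (En v n) \<le> ennreal (exp (- g * v))"
      unfolding En_def by (rule grid_bound[OF _ g z]) simp
  qed
  finally show ?thesis .
qed

lemma case2:
  assumes g: "g > 0" "g < \<alpha>" and z: "psi p \<alpha> \<beta> \<sigma>2 (- g) = 0"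
  shows "ruin_prob M X u \<le> exp (- g * u)"
proof -
  define R where "R = {\<omega> \<in> space M. ruin_time X u \<omega> < \<infinity>}"
  show ?thesis
  proof (cases "R \<in> sets (completion M)")
    case False
    have "ruin_prob M X u = 0" unfolding ruin_prob_def using measure_notin_sets[OF False[unfolded R_def]] .
    then show ?thesis by simp
  next
    case True
    have cad: "AE \<omega> in M. cadlag (\<lambda>t. X t \<omega>)" using levy by (simp add: levy_process_def)
    have le: "ruin_prob M X u \<le> exp (- g * (u - e))" if e: "e > 0" for e
    proof -
      have sub: "AE \<omega> in M. \<omega> \<in> R \<longrightarrow> \<omega> \<in> (\<Union>n. En (u - e) n)"
        using cad
      proof (eventually_elim)
        case (elim \<omega>)
        show ?case
        proof
          assume "\<omega> \<in> R"
          then obtain t where t: "t \<ge> 0" "X t \<omega> \<le> - u" and \<omega>: "\<omega> \<in> space M"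
            by (auto simp: R_def ruin_time_finite_iff ruin_time_finite_iff')
          from cadlag_dyadic[OF elim t e] obtain n k where "k \<le> 4 ^ n" "X (real k * (1 / 2 ^ n)) \<omega> \<le> - (u - e)"
            by blast
          then show "\<omega> \<in> (\<Union>n. En (u - e) n)" using \<omega> by (auto simp: En_def)
        qed
      qed
      have Us: "(\<Union>n. En (u - e) n) \<in> events" using En_sets by auto
      have "emeasure (completion M) R \<le> emeasure (completion M) (\<Union>n. En (u - e) n)"
        by (rule emeasure_mono_AE) (use sub Us in \<open>auto intro: AE_completion\<close>)
      also have "\<dots> = emeasure M (\<Union>n. En (u - e) n)" using Us by simp
      also have "\<dots> \<le> ennreal (exp (- g * (u - e)))" by (rule Ev_bound[OF g z])
      finally have "emeasure (completion M) R \<le> ennreal (exp (- g * (u - e)))" .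
      then show ?thesis unfolding ruin_prob_def R_def[symmetric] measure_def
        by (simp add: enn2real_leI)
    qed
    have "((\<lambda>e. exp (- g * (u - e))) \<longlongrightarrow> exp (- g * (u - 0))) (at_right 0)"
      by (intro tendsto_intros)
    then show ?thesis
      by (intro tendsto_lowerbound[where F="at_right (0::real)"])
         (use le in \<open>auto simp: eventually_at_right_field intro!: exI[of _ 1]\<close>)
  qed
qed

end

lemma lim_case1:
  fixes C s v u :: real assumes s: "s > 0" and v: "v > 0"
  shows "((\<lambda>r. exp (- sqrt r) * (exp (- r * u) - C * exp (- (s - r) / sqrt r) * (2 / (v * r^2)))) \<longlongrightarrow> 1) (at_right 0)"
  using s v by real_asymp

context ruin_setting
begin

lemma psi_pos_case1:
  assumes pb: "p \<le> \<beta> / \<alpha>" and r: "r > 0" "r < \<alpha>"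
  shows "psi p \<alpha> \<beta> \<sigma>2 (- r) \<ge> \<sigma>2 * r^2 / 2"
proof -
  have "\<beta> / \<alpha> \<le> \<beta> / (\<alpha> - r)" using r al be by (intro divide_left_mono) auto
  then have "p \<le> \<beta> / (\<alpha> - r)" using pb by linarith
  then have "0 \<le> r * (\<beta> / (\<alpha> - r) - p)" using r by simp
  moreover have "psi p \<alpha> \<beta> \<sigma>2 (- r) = \<sigma>2 * r^2 / 2 + r * (\<beta> / (\<alpha> - r) - p)"
    unfolding psi_def using r by (simp add: field_simps power2_eq_square)
  ultimately show ?thesis by simp
qed

definition Gset :: "real \<Rightarrow> 'a set" where
  "Gset u = (\<Union>N. {\<omega> \<in> space M. rn N u (\<lambda>j. xh 1 j \<omega>)})"

lemma Gset_sets: "Gset u \<in> events"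
proof -
  have mgf: "(\<integral>\<^sup>+\<omega>. ennreal (exp (- 0 * xh 1 k \<omega>)) \<partial>M) = ennreal (exp 0)" for k
    by (simp add: emeasure_space_1)
  show ?thesis unfolding Gset_def
    using rn_xi_sets[OF xh_indep mgf] by auto
qed

lemma case1_G:
  assumes pb: "p \<le> \<beta> / \<alpha>" and u: "u > 0"
  shows "prob (Gset u) = 1"
proof -
  define s where "s = \<alpha> / 2"
  define C where "C = exp (psi p \<alpha> \<beta> \<sigma>2 (- s))"
  have s0: "s > 0" "s < \<alpha>" using al by (auto simp: s_def)
  have lowr: "exp (- sqrt r) * (exp (- r * u) - C * exp (- (s - r) / sqrt r) * (2 / (\<sigma>2 * r^2))) \<le> prob (Gset u)"
    if r: "r > 0" "r < s" for r
  proof -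
    define K where "K = 1 / sqrt r"
    define c where "c = psi p \<alpha> \<beta> \<sigma>2 (- r)"
    define D where "D = (\<integral>\<^sup>+x. ennreal (exp (- r * x)) * indicator {..< -K} x \<partial>distr M borel (X 1))"
    have ra: "r < \<alpha>" using r s0 by simp
    have c0: "c \<ge> \<sigma>2 * r^2 / 2" unfolding c_def by (rule psi_pos_case1[OF pb r(1) ra])
    have "\<sigma>2 * r^2 / 2 > 0" using s r by simp
    then have cpos: "c > 0" using c0 by linarith
    have mgf: "(\<integral>\<^sup>+\<omega>. ennreal (exp (- r * xh 1 k \<omega>)) \<partial>M) = ennreal (exp c)" for k
      using xh_mgf[of 1 "- r" k] ra by (simp add: c_def)
    have Dk: "(\<integral>\<^sup>+\<omega>. ennreal (exp (- r * xh 1 k \<omega>)) * indicator {..< -K} (xh 1 k \<omega>) \<partial>M) = D" for k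
      unfolding D_def by (rule xh_nn_integral[where f="\<lambda>x. ennreal (exp (- r * x)) * indicator {..< -K} x"]) auto
    have WL: "exp (- r * u) \<le> exp (r * K) * prob (Gset u) + enn2real D / c"
      unfolding Gset_def
      by (rule walk_lower[OF xh_indep mgf _ cpos Dk u]) (use r in auto)
    have Dle: "D \<le> ennreal (exp (- (s - r) * K)) * ennreal C"
    proof -
      have "D \<le> (\<integral>\<^sup>+x. ennreal (exp (- (s - r) * K)) * ennreal (exp (- s * x)) \<partial>distr M borel (X 1))"
        unfolding D_def
      proof (rule nn_integral_mono)
        fix x :: real
        show "ennreal (exp (- r * x)) * indicator {..< -K} x \<le> ennreal (exp (- (s - r) * K)) * ennreal (exp (- s * x))"
        proof (cases "x < - K")
          case True
          have "(s - r) * x \<le> (s - r) * (- K)" using True r by (intro mult_left_mono) auto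
          then have "- r * x \<le> - (s - r) * K + - s * x" by (simp add: algebra_simps)
          then have "exp (- r * x) \<le> exp (- (s - r) * K) * exp (- s * x)" by (simp add: exp_add[symmetric])
          then show ?thesis using True by (simp add: ennreal_mult[symmetric] ennreal_leI)
        qed simp
      qed
      also have "\<dots> = ennreal (exp (- (s - r) * K)) * (\<integral>\<^sup>+x. ennreal (exp (- s * x)) \<partial>distr M borel (X 1))"
        by (rule nn_integral_cmult) measurable
      also have "(\<integral>\<^sup>+x. ennreal (exp (- s * x)) \<partial>distr M borel (X 1)) = ennreal C"
        using mgf_X[of 1 "- s"] s0 by (subst nn_integral_distr) (auto simp: C_def)
      finally show ?thesis .
    qed
    have Dr: "enn2real D \<le> exp (- (s - r) * K) * C"
      using Dle by (subst (asm) ennreal_mult[symmetric]) (auto simp: C_def intro: enn2real_leI)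
    have "enn2real D / c \<le> exp (- (s - r) * K) * C / (\<sigma>2 * r^2 / 2)"
      using Dr c0 cpos s r by (intro frac_le) (auto simp: C_def)
    also have "\<dots> = C * exp (- (s - r) / sqrt r) * (2 / (\<sigma>2 * r^2))"
    proof -
      have kk: "- (s - r) * K = - (s - r) / sqrt r" by (simp add: K_def)
      show ?thesis unfolding kk by (simp add: field_simps)
    qed
    finally have "exp (- r * u) - C * exp (- (s - r) / sqrt r) * (2 / (\<sigma>2 * r^2)) \<le> exp (r * K) * prob (Gset u)"
      using WL by linarith
    then have "exp (- r * K) * (exp (- r * u) - C * exp (- (s - r) / sqrt r) * (2 / (\<sigma>2 * r^2)))
        \<le> exp (- r * K) * (exp (r * K) * prob (Gset u))"
      by (rule mult_left_mono) simp
    also have "exp (- r * K) * (exp (r * K) * prob (Gset u)) = prob (Gset u)"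
      by (simp add: mult.assoc[symmetric] exp_add[symmetric])
    finally have "exp (- r * K) * (exp (- r * u) - C * exp (- (s - r) / sqrt r) * (2 / (\<sigma>2 * r^2))) \<le> prob (Gset u)" .
    moreover have "r * K = sqrt r" using r by (simp add: K_def real_div_sqrt)
    ultimately show ?thesis by simp
  qed
  have E: "\<forall>\<^sub>F r in at_right 0. exp (- sqrt r) * (exp (- r * u) - C * exp (- (s - r) / sqrt r) * (2 / (\<sigma>2 * r^2))) \<le> prob (Gset u)"
  proof -
    have "\<forall>\<^sub>F r in at_right 0. r > 0 \<and> r < s"
      unfolding eventually_at_right_field using s0 by (intro exI[of _ s]) auto
    then show ?thesis by (rule eventually_mono) (intro lowr; simp)
  qed
  have "1 \<le> prob (Gset u)"
    by (rule tendsto_le[OF _ tendsto_const lim_case1[OF s0(1) s, where C=C and u=u] E]) simp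
  then show ?thesis using prob_le_1[of "Gset u"] by simp
qed

end

context ruin_setting
begin

lemma case1:
  assumes pb: "p \<le> \<beta> / \<alpha>" and u: "u \<ge> 0"
  shows "ruin_prob M X u = 1"
proof -
  define R where "R = {\<omega> \<in> space M. ruin_time X u \<omega> < \<infinity>}"
  have AER: "AE \<omega> in M. \<omega> \<in> R"
  proof (cases "u = 0")
    case True
    show ?thesis using X0 AE_space by eventually_elim (use True in \<open>auto simp: R_def ruin_time_finite_iff ruin_time_finite_iff' intro!: exI[of _ 0]\<close>)
  next
    case False
    then have u0: "u > 0" using u by simp
    have "AE \<omega> in M. \<omega> \<in> Gset u" by (rule AE_prob_1[OF case1_G[OF pb u0]])
    then show ?thesis using X0
    proof eventually_elim
      case (elim \<omega>)
      then obtain N k where \<omega>: "\<omega> \<in> space M" and k: "k \<le> N" "Sw k (\<lambda>j. xh 1 j \<omega>) \<le> - u"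
        by (auto simp: Gset_def rn_def)
      then have "X (real k) \<omega> \<le> - u" using elim by (simp add: Sw_xh)
      then show ?case using \<omega> by (auto simp: R_def ruin_time_finite_iff ruin_time_finite_iff' intro!: exI[of _ "real k"])
    qed
  qed
  interpret C: prob_space "completion M"
    by (rule prob_spaceI) (simp add: emeasure_space_1)
  have Rs: "R \<in> sets (completion M)"
  proof -
    have "Measurable.pred (completion M) (\<lambda>x. x \<notin> R)"
      by (rule sets_completion_AE) (use AER in simp)
    then have "{x \<in> space M. x \<notin> R} \<in> sets (completion M)" by (simp add: Measurable.pred_def)
    then have "space M - {x \<in> space M. x \<notin> R} \<in> sets (completion M)"
      by (metis sets.compl_sets space_completion)
    moreover have "space M - {x \<in> space M. x \<notin> R} = R" by (auto simp: R_def)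
    ultimately show ?thesis by simp
  qed
  have "C.prob R = 1"
    using C.prob_eq_1[OF Rs] AE_completion[OF AER] by simp
  then show ?thesis by (simp add: ruin_prob_def R_def)
qed

end

theorem proposition1:
  fixes M :: "'a measure" and X :: "real \<Rightarrow> 'a \<Rightarrow> real"
    and p \<alpha> \<beta> \<sigma>2 a :: real
  assumes "p > 0" and "\<alpha> > 0" and "\<beta> > 0" and "\<sigma>2 > 0"
    and "a = p + (LINT x|exp_jump_measure \<alpha> \<beta>. x * indicator {y. \<bar>y\<bar> < 1} x)"
    and "levy_process M X"
    and "has_characteristics M X a \<sigma>2 (exp_jump_measure \<alpha> \<beta>)"
  shows "let \<Delta> = (\<sigma>2 * \<alpha> - 2 * p)\<^sup>2 + 8 * \<sigma>2 * \<beta>;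
             \<gamma> = (\<sigma>2 * \<alpha> + 2 * p - sqrt \<Delta>) / (2 * \<sigma>2)
         in (p \<le> \<beta> / \<alpha> \<longrightarrow> (\<forall>u\<ge>0. ruin_prob M X u = 1))
          \<and> (p > \<beta> / \<alpha> \<and> \<gamma> < \<alpha> \<longrightarrow> (\<forall>u\<ge>0. ruin_prob M X u \<le> exp (- \<gamma> * u)))
          \<and> (p > \<beta> / \<alpha> \<and> \<gamma> \<ge> \<alpha> \<longrightarrow> (\<forall>u\<ge>0. ruin_prob M X u \<le> exp (- \<alpha> * u)))"
proof -
  interpret ruin_setting M X p \<alpha> \<beta> \<sigma>2 a
    using assms by (unfold_locales) auto
  define \<gamma> where "\<gamma> = (\<sigma>2 * \<alpha> + 2 * p - sqrt ((\<sigma>2 * \<alpha> - 2 * p)\<^sup>2 + 8 * \<sigma>2 * \<beta>)) / (2 * \<sigma>2)"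
  have A: "p \<le> \<beta> / \<alpha> \<longrightarrow> (\<forall>u\<ge>0. ruin_prob M X u = 1)"
    using case1 by blast
  have B: "p > \<beta> / \<alpha> \<and> \<gamma> < \<alpha> \<longrightarrow> (\<forall>u\<ge>0. ruin_prob M X u \<le> exp (- \<gamma> * u))"
  proof (intro impI allI)
    assume pb: "p > \<beta> / \<alpha> \<and> \<gamma> < \<alpha>"
    note gf = gamma_facts[OF assms(1-4) pb[THEN conjunct1]]
    fix u :: real
    show "ruin_prob M X u \<le> exp (- \<gamma> * u)"
      using case2[OF gf(1) gf(2) gf(3)] unfolding \<gamma>_def .
  qed
  have C: "p > \<beta> / \<alpha> \<and> \<gamma> \<ge> \<alpha> \<longrightarrow> (\<forall>u\<ge>0. ruin_prob M X u \<le> exp (- \<alpha> * u))"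
  proof
    assume pb: "p > \<beta> / \<alpha> \<and> \<gamma> \<ge> \<alpha>"
    note gf = gamma_facts[OF assms(1-4) pb[THEN conjunct1]]
    then show "\<forall>u\<ge>0. ruin_prob M X u \<le> exp (- \<alpha> * u)" using pb unfolding \<gamma>_def by linarith
  qed
  show ?thesis unfolding Let_def using A B C by (simp only: \<gamma>_def)
qed

end
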